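(* Let $S$ be a semibounded relation in $\mathfrak H$ with lower bound $\gamma\in\mathbb R$, let $c\le\gamma$, and let $Q_c$ (into $\mathfrak K_c$) be a representing map for $\mathfrak t(S)-c$ with companion relation $J_c$. For a relation $H$ in $\mathfrak H$ the following are equivalent: (i) $H$ is a selfadjoint extension of $S$, bounded below by $c$, with $\mathfrak t_{S_{\rm F}}\subset\mathfrak t_H\subset\mathfrak t_{S_{{\rm K},c}}$; (ii) $H=c+R_c^*R_c^{**}$ for some operator $R_c$ from $\mathfrak H$ to $\mathfrak K_c$ satisfying $Q_c\subset R_c\subset(J_c^* )_{\rm reg}$.
   Context: Linear relations are linear subspaces of $\mathfrak H\times\mathfrak K$; $T^*$ adjoint, $T^{**}$ closure; products $RT=\{\{f,h\}:\exists g,\{f,g\}\in T,\{g,h\}\in R\}$; $c+T=\{\{f,g+cf\}:\{f,g\}\in T\}$; for closed $T$, $T_{\rm reg}=\{\{f,(I-\pi)g\}:\{f,g\}\in T\}$ with $\pi$ the projection onto $\mathrm{mul}\,T$. $S$ semibounded with lower bound $\gamma$: $\gamma$ is the supremum of $c$ with $(\varphi',\varphi)\ge c\|\varphi\|^2$ on $S$; $\mathfrak t(S)[\varphi,\psi]=(\varphi',\psi)$ on $\mathrm{dom}\,S$. A representing map for $\mathfrak t(S)-c$ is a linear operator $Q_c$ into a Hilbert space $\mathfrak K_c$ with $\mathrm{dom}\,Q_c=\mathrm{dom}\,S$ and $\mathfrak t(S)[\varphi,\psi]=c(\varphi,\psi)+(Q_c\varphi,Q_c\psi)$; companion relation $J_c=\{\{Q_c\varphi,\varphi'-c\varphi\}:\{\varphi,\varphi'\}\in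 S\}$. Friedrichs extension $S_{\rm F}=c+Q_c^*Q_c^{**}$, Kreĭn type extension $S_{{\rm K},c}=c+J_c^{**}J_c^*$. For a semibounded selfadjoint relation $H$, $\mathfrak t_H$ is its associated closed form (closure of $\mathfrak t(H)[\varphi,\psi]=(\varphi',\psi)$ on $\mathrm{dom}\,H$). Form inclusion $\mathfrak t_1\subset\mathfrak t_2$ means $\mathfrak t_2$ extends $\mathfrak t_1$. *)

theory Defs
  imports "HOL-Analysis.Analysis"
begin

text \<open>HOL-Analysis only provides real inner product spaces, so we introduce complex Hilbert
spaces as a type class: a real Banach space with a compatible complex scalar multiplication and
a complex inner product (linear in the first argument, conjugate linear in the second) that
induces the norm.\<close>

class chilbert = real_normed_vector + complete_space +
  fixes scaleC :: "complex \<Rightarrow> 'a \<Rightarrow> 'a"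
    and cinner :: "'a \<Rightarrow> 'a \<Rightarrow> complex"
  assumes scaleC_add_right: "scaleC a (x + y) = scaleC a x + scaleC a y"
    and scaleC_add_left: "scaleC (a + b) x = scaleC a x + scaleC b x"
    and scaleC_scaleC: "scaleC a (scaleC b x) = scaleC (a * b) x"
    and scaleC_one: "scaleC 1 x = x"
    and scaleR_scaleC: "scaleR r x = scaleC (complex_of_real r) x"
    and cinner_commute: "cinner x y = cnj (cinner y x)"
    and cinner_add_left: "cinner (x + y) z = cinner x z + cinner y z"
    and cinner_scaleC_left: "cinner (scaleC a x) y = a * cinner x y"
    and norm_eq_sqrt_cinner: "norm x = sqrt (Re (cinner x x))"

text \<open>Non-vacuity: the complex numbers form a complex Hilbert space.\<close>

instantiation complex :: chilbert
begin
definition scaleC_complex :: "complex \<Rightarrow> complex \<Rightarrow> complex" where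
  "scaleC_complex a x = a * x"
definition cinner_complex :: "complex \<Rightarrow> complex \<Rightarrow> complex" where
  "cinner_complex x y = x * cnj y"
instance
proof
  fix x :: complex
  have "Re (x * cnj x) = (Re x)\<^sup>2 + (Im x)\<^sup>2"
    by (simp add: power2_eq_square)
  then show "norm x = sqrt (Re (cinner x x))"
    by (simp add: cinner_complex_def norm_complex_def)
qed (auto simp: scaleC_complex_def cinner_complex_def algebra_simps scaleR_conv_of_real)
end

text \<open>A relation from \<open>'a\<close> to \<open>'b\<close> is a set of pairs; \<open>(f, g) \<in> T\<close> stands for \<open>{f,g} \<in> T\<close>.\<close>

definition csubspace :: "'a::chilbert set \<Rightarrow> bool" where
  "csubspace M \<longleftrightarrow> 0 \<in> M \<and> (\<forall>x\<in>M. \<forall>y\<in>M. x + y \<in> M) \<and> (\<forall>a. \<forall>x\<in>M. scaleC a x \<in> M)"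

definition linear_relation :: "('a::chilbert \<times> 'b::chilbert) set \<Rightarrow> bool" where
  "linear_relation T \<longleftrightarrow> (0, 0) \<in> T \<and> (\<forall>p\<in>T. \<forall>q\<in>T. (fst p + fst q, snd p + snd q) \<in> T)
     \<and> (\<forall>a. \<forall>p\<in>T. (scaleC a (fst p), scaleC a (snd p)) \<in> T)"

definition rdom :: "('a \<times> 'b) set \<Rightarrow> 'a set" where
  "rdom T = {f. \<exists>g. (f, g) \<in> T}"

definition rmul :: "('a::zero \<times> 'b) set \<Rightarrow> 'b set" where
  "rmul T = {g. (0, g) \<in> T}"

definition is_operator :: "('a::chilbert \<times> 'b::chilbert) set \<Rightarrow> bool" where
  "is_operator T \<longleftrightarrow> linear_relation T \<and> rmul T = {0}"

definition adj :: "('a::chilbert \<times> 'b::chilbert) set \<Rightarrow> ('b \<times> 'a) set" where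
  "adj T = {(h, k). \<forall>(f, g)\<in>T. cinner g h = cinner f k}"

definition rprod :: "('b \<times> 'c) set \<Rightarrow> ('a \<times> 'b) set \<Rightarrow> ('a \<times> 'c) set" where
  "rprod R T = {(f, h). \<exists>g. (f, g) \<in> T \<and> (g, h) \<in> R}"

definition rshift :: "real \<Rightarrow> ('a::chilbert \<times> 'a) set \<Rightarrow> ('a \<times> 'a) set" where
  "rshift c T = {(f, g + scaleC (complex_of_real c) f) | f g. (f, g) \<in> T}"

definition oproj :: "'a::chilbert set \<Rightarrow> 'a \<Rightarrow> 'a" where
  "oproj M g = (THE p. p \<in> M \<and> (\<forall>m\<in>M. cinner (g - p) m = 0))"

definition rreg :: "('a::chilbert \<times> 'b::chilbert) set \<Rightarrow> ('a \<times> 'b) set" where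
  "rreg T = {(f, g - oproj (rmul T) g) | f g. (f, g) \<in> T}"

definition selfadjoint :: "('a::chilbert \<times> 'a) set \<Rightarrow> bool" where
  "selfadjoint H \<longleftrightarrow> adj H = H"

definition bounded_below_by :: "('a::chilbert \<times> 'a) set \<Rightarrow> real \<Rightarrow> bool" where
  "bounded_below_by T c \<longleftrightarrow>
     (\<forall>(\<phi>, \<phi>')\<in>T. Im (cinner \<phi>' \<phi>) = 0 \<and> Re (cinner \<phi>' \<phi>) \<ge> c * (norm \<phi>)\<^sup>2)"

definition semibounded :: "('a::chilbert \<times> 'a) set \<Rightarrow> bool" where
  "semibounded T \<longleftrightarrow> linear_relation T \<and> (\<exists>c. bounded_below_by T c)"

definition lower_bound :: "('a::chilbert \<times> 'a) set \<Rightarrow> real \<Rightarrow> bool" where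
  "lower_bound S \<gamma> \<longleftrightarrow> semibounded S \<and> \<gamma> = Sup {c. bounded_below_by S c}
     \<and> bdd_above {c. bounded_below_by S c}"

text \<open>A (sesquilinear) form is given by its domain and its values.\<close>

type_synonym 'a form = "'a set \<times> ('a \<Rightarrow> 'a \<Rightarrow> complex)"

definition form_incl :: "'a form \<Rightarrow> 'a form \<Rightarrow> bool" where
  "form_incl t1 t2 \<longleftrightarrow> fst t1 \<subseteq> fst t2 \<and> (\<forall>x\<in>fst t1. \<forall>y\<in>fst t1. snd t2 x y = snd t1 x y)"

definition rform :: "('a::chilbert \<times> 'a) set \<Rightarrow> 'a form" where
  "rform S = (rdom S, \<lambda>\<phi> \<psi>. cinner (SOME \<phi>'. (\<phi>, \<phi>') \<in> S) \<psi>)"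

definition form_approx :: "'a::chilbert form \<Rightarrow> (nat \<Rightarrow> 'a) \<Rightarrow> 'a \<Rightarrow> bool" where
  "form_approx t u x \<longleftrightarrow> (\<forall>n. u n \<in> fst t) \<and> u \<longlonglongrightarrow> x \<and>
     (\<forall>e>0. \<exists>N. \<forall>m\<ge>N. \<forall>n\<ge>N. cmod (snd t (u n - u m) (u n - u m)) < e)"

definition form_closure :: "'a::chilbert form \<Rightarrow> 'a form" where
  "form_closure t = ({x. \<exists>u. form_approx t u x},
     \<lambda>x y. lim (\<lambda>n. snd t ((SOME u. form_approx t u x) n) ((SOME u. form_approx t u y) n)))"

definition closed_form :: "('a::chilbert \<times> 'a) set \<Rightarrow> 'a form" where
  "closed_form H = form_closure (rform H)"

definition representing_map :: "('a::chilbert \<times> 'a) set \<Rightarrow> real \<Rightarrow> ('a \<times> 'k::chilbert) set \<Rightarrow> bool" where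
  "representing_map S c Q \<longleftrightarrow> is_operator Q \<and> rdom Q = rdom S \<and>
     (\<forall>(\<phi>, \<phi>')\<in>S. \<forall>(\<psi>, \<psi>')\<in>S. \<forall>q p. (\<phi>, q) \<in> Q \<longrightarrow> (\<psi>, p) \<in> Q \<longrightarrow>
        cinner \<phi>' \<psi> = complex_of_real c * cinner \<phi> \<psi> + cinner q p)"

definition companion :: "('a::chilbert \<times> 'a) set \<Rightarrow> real \<Rightarrow> ('a \<times> 'k::chilbert) set \<Rightarrow> ('k \<times> 'a) set" where
  "companion S c Q = {(q, \<phi>' - scaleC (complex_of_real c) \<phi>) | \<phi> \<phi>' q. (\<phi>, \<phi>') \<in> S \<and> (\<phi>, q) \<in> Q}"

definition friedrichs :: "real \<Rightarrow> ('a::chilbert \<times> 'k::chilbert) set \<Rightarrow> ('a \<times> 'a) set" where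
  "friedrichs c Q = rshift c (rprod (adj Q) (adj (adj Q)))"

definition krein :: "real \<Rightarrow> ('k::chilbert \<times> 'a::chilbert) set \<Rightarrow> ('a \<times> 'a) set" where
  "krein c J = rshift c (rprod (adj (adj J)) (adj J))"

end

theory Submission
  imports Defs
begin

lemma cinner_add_right: "cinner x (y + z) = cinner x y + cinner x z"
  by (metis cinner_commute cinner_add_left complex_cnj_add)
lemma cinner_scaleC_right: "cinner x (scaleC a y) = cnj a * cinner x y"
  by (metis cinner_commute cinner_scaleC_left complex_cnj_mult complex_cnj_cnj)
lemma scaleC_zero_right [simp]: "scaleC a (0::'a::chilbert) = 0"
  by (metis add_cancel_right_right add_0 scaleC_add_right)
lemma scaleC_zero_left [simp]: "scaleC 0 (x::'a::chilbert) = 0"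
  by (metis of_real_0 scaleR_scaleC scaleR_zero_left)
lemma scaleC_minus_right: "scaleC a (- (x::'a::chilbert)) = - scaleC a x"
  by (metis add.inverse_unique left_minus scaleC_add_right scaleC_zero_right)
lemma scaleC_minus_left: "scaleC (- a) (x::'a::chilbert) = - scaleC a x"
  by (metis add.inverse_unique add.right_inverse scaleC_add_left scaleC_zero_left)
lemma scaleC_diff_right: "scaleC a ((x::'a::chilbert) - y) = scaleC a x - scaleC a y"
  by (metis diff_conv_add_uminus scaleC_add_right scaleC_minus_right)
lemma scaleC_diff_left: "scaleC (a - b) (x::'a::chilbert) = scaleC a x - scaleC b x"
  by (metis diff_conv_add_uminus scaleC_add_left scaleC_minus_left)
lemma cinner_zero_left [simp]: "cinner 0 y = 0"
proof -
  have "cinner (0+0) y = cinner 0 y + cinner 0 y" by (rule cinner_add_left)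
  thus ?thesis by simp
qed
lemma cinner_zero_right [simp]: "cinner x 0 = 0"
  by (subst cinner_commute, simp)
lemma cinner_minus_left: "cinner (- x) y = - cinner x y"
proof -
  have "cinner (x + - x) y = cinner x y + cinner (- x) y" by (rule cinner_add_left)
  thus ?thesis by (simp add: eq_neg_iff_add_eq_0 add.commute)
qed
lemma cinner_minus_right: "cinner x (- y) = - cinner x y"
  by (subst cinner_commute, subst (2) cinner_commute, simp add: cinner_minus_left)
lemma cinner_diff_left: "cinner (x - y) z = cinner x z - cinner y z"
  unfolding diff_conv_add_uminus cinner_add_left cinner_minus_left by simp
lemma cinner_diff_right: "cinner x (y - z) = cinner x y - cinner x z"
  unfolding diff_conv_add_uminus cinner_add_right cinner_minus_right by simp
lemma cinner_scaleR_left: "cinner (scaleR r x) y = complex_of_real r * cinner x y"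
  unfolding scaleR_scaleC by (rule cinner_scaleC_left)
lemma cinner_scaleR_right: "cinner x (scaleR r y) = complex_of_real r * cinner x y"
  unfolding scaleR_scaleC cinner_scaleC_right by simp

lemma cinner_self_Im: "Im (cinner x x) = 0"
proof -
  have "cinner x x = cnj (cinner x x)" by (rule cinner_commute)
  hence "Im (cinner x x) = Im (cnj (cinner x x))" by (rule arg_cong)
  thus ?thesis by simp
qed
lemma cinner_self_Re: "Re (cinner x x) = (norm x)\<^sup>2"
proof -
  have "sqrt (Re (cinner x x)) \<ge> 0" using norm_eq_sqrt_cinner[of x] by (metis norm_ge_zero)
  hence "Re (cinner x x) \<ge> 0" using real_sqrt_ge_0_iff by blast
  thus ?thesis by (metis norm_eq_sqrt_cinner real_sqrt_pow2)
qed
lemma cinner_self: "cinner x x = complex_of_real ((norm x)\<^sup>2)"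
  using cinner_self_Im cinner_self_Re complex_eq_iff by auto
lemma cinner_self_eq_0 [simp]: "cinner x x = 0 \<longleftrightarrow> x = 0"
  by (simp add: cinner_self)

lemma norm_scaleC: "norm (scaleC a x) = cmod a * norm x"
proof -
  have "cinner (scaleC a x) (scaleC a x) = a * (cnj a * cinner x x)"
    unfolding cinner_scaleC_left cinner_scaleC_right by (simp add: mult.left_commute)
  also have "\<dots> = complex_of_real ((cmod a)\<^sup>2 * (norm x)\<^sup>2)"
    unfolding cinner_self mult.assoc[symmetric] complex_norm_square[symmetric] by simp
  finally have "(norm (scaleC a x))\<^sup>2 = (cmod a * norm x)\<^sup>2"
    unfolding cinner_self of_real_eq_iff power_mult_distrib .
  thus ?thesis using power2_eq_iff_nonneg[of "norm (scaleC a x)" "cmod a * norm x"] by simp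
qed

lemma Cauchy_Schwarz: "cmod (cinner x y) \<le> norm x * norm y"
proof (cases "y = 0")
  case True thus ?thesis by simp
next
  case False
  define n where "n = (norm y)\<^sup>2"
  have n: "n > 0" using False by (simp add: n_def)
  define c where "c = cinner x y"
  define t where "t = c / complex_of_real n"
  have cc: "c * cnj c = complex_of_real ((cmod c)\<^sup>2)" by (rule complex_norm_square[symmetric])
  have "cinner (x - scaleC t y) (x - scaleC t y) =
     cinner x x - cnj t * cinner x y - t * cinner y x + t * cnj t * cinner y y"
    unfolding cinner_diff_left cinner_diff_right cinner_scaleC_left cinner_scaleC_right
    by (simp add: algebra_simps)
  also have "cinner y y = complex_of_real n" by (simp add: cinner_self n_def)
  also have "cinner y x = cnj c" unfolding c_def by (rule cinner_commute)
  also have "cinner x x - cnj t * cinner x y - t * cnj c + t * cnj t * complex_of_real n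
      = complex_of_real ((norm x)\<^sup>2) - c * cnj c / complex_of_real n"
    using n unfolding t_def c_def[symmetric] cinner_self by (simp add: field_simps power2_eq_square)
  also have "\<dots> = complex_of_real ((norm x)\<^sup>2 - (cmod c)\<^sup>2 / n)"
    unfolding cc by simp
  finally have "(norm (x - scaleC t y))\<^sup>2 = (norm x)\<^sup>2 - (cmod c)\<^sup>2 / n"
    unfolding cinner_self of_real_eq_iff .
  hence "0 \<le> (norm x)\<^sup>2 - (cmod c)\<^sup>2 / n" by (metis zero_le_power2)
  hence "(cmod c)\<^sup>2 \<le> (norm x)\<^sup>2 * n"
    using n by (simp add: field_simps)
  hence "(cmod c)\<^sup>2 \<le> (norm x * norm y)\<^sup>2"
    by (simp add: n_def power_mult_distrib)
  thus ?thesis unfolding c_def by (rule power2_le_imp_le) simp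
qed

lemma bounded_bilinear_cinner: "bounded_bilinear (cinner :: 'a::chilbert \<Rightarrow> 'a \<Rightarrow> complex)"
proof
  fix a b :: 'a and r :: real
  show "cinner (a + a') b = cinner a b + cinner a' b" for a' by (rule cinner_add_left)
  show "cinner a (b + b') = cinner a b + cinner a b'" for b' by (rule cinner_add_right)
  show "cinner (scaleR r a) b = scaleR r (cinner a b)" by (simp add: cinner_scaleR_left scaleR_conv_of_real)
  show "cinner a (scaleR r b) = scaleR r (cinner a b)" by (simp add: cinner_scaleR_right scaleR_conv_of_real)
  show "\<exists>K. \<forall>a b::'a. norm (cinner a b) \<le> norm a * norm b * K"
    by (rule exI[of _ 1]) (simp add: Cauchy_Schwarz)
qed

lemmas tendsto_cinner = bounded_bilinear.tendsto[OF bounded_bilinear_cinner]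
lemmas continuous_on_cinner = bounded_bilinear.continuous_on[OF bounded_bilinear_cinner]


instantiation prod :: (chilbert, chilbert) chilbert
begin
definition scaleC_prod :: "complex \<Rightarrow> 'a \<times> 'b \<Rightarrow> 'a \<times> 'b" where
  "scaleC_prod a p = (scaleC a (fst p), scaleC a (snd p))"
definition cinner_prod :: "'a \<times> 'b \<Rightarrow> 'a \<times> 'b \<Rightarrow> complex" where
  "cinner_prod p q = cinner (fst p) (fst q) + cinner (snd p) (snd q)"
instance
proof
  fix x y :: "'a \<times> 'b" and z :: "'a \<times> 'b" and a b :: complex and r :: real
  show "scaleC a (x + y) = scaleC a x + scaleC a y"
    by (simp add: scaleC_prod_def scaleC_add_right)
  show "scaleC (a + b) x = scaleC a x + scaleC b x"
    by (simp add: scaleC_prod_def scaleC_add_left)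
  show "scaleC a (scaleC b x) = scaleC (a * b) x"
    by (simp add: scaleC_prod_def scaleC_scaleC)
  show "scaleC 1 x = x" by (simp add: scaleC_prod_def scaleC_one)
  show "scaleR r x = scaleC (complex_of_real r) x"
    by (simp add: scaleC_prod_def scaleR_prod_def scaleR_scaleC)
  show "cinner x y = cnj (cinner y x)"
    by (simp add: cinner_prod_def) (metis cinner_commute)
  show "cinner (x + y) z = cinner x z + cinner y z"
    by (simp add: cinner_prod_def cinner_add_left)
  show "cinner (scaleC a x) y = a * cinner x y"
    by (simp add: cinner_prod_def scaleC_prod_def cinner_scaleC_left algebra_simps)
  show "norm x = sqrt (Re (cinner x x))"
    by (simp add: cinner_prod_def norm_prod_def cinner_self_Re)
qed
end

lemma cinner_Pair: "cinner (a, b) (c, d) = cinner a c + cinner b d"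
  by (simp add: cinner_prod_def)
lemma scaleC_Pair: "scaleC r (a, b) = (scaleC r a, scaleC r b)"
  by (simp add: scaleC_prod_def)

lemma norm_sub_proj:
  assumes "y \<noteq> 0"
  shows "(norm (x - scaleC (cinner x y / complex_of_real ((norm y)\<^sup>2)) y))\<^sup>2
          = (norm x)\<^sup>2 - (cmod (cinner x y))\<^sup>2 / (norm y)\<^sup>2"
proof -
  define n where "n = (norm y)\<^sup>2"
  have n: "n > 0" using assms by (simp add: n_def)
  define c where "c = cinner x y"
  define t where "t = c / complex_of_real n"
  have cc: "c * cnj c = complex_of_real ((cmod c)\<^sup>2)" by (rule complex_norm_square[symmetric])
  have "cinner (x - scaleC t y) (x - scaleC t y) =
     cinner x x - cnj t * cinner x y - t * cinner y x + t * cnj t * cinner y y"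
    unfolding cinner_diff_left cinner_diff_right cinner_scaleC_left cinner_scaleC_right
    by (simp add: algebra_simps)
  also have "cinner y y = complex_of_real n" by (simp add: cinner_self n_def)
  also have "cinner y x = cnj c" unfolding c_def by (rule cinner_commute)
  also have "cinner x x - cnj t * cinner x y - t * cnj c + t * cnj t * complex_of_real n
      = complex_of_real ((norm x)\<^sup>2) - c * cnj c / complex_of_real n"
    using n unfolding t_def c_def[symmetric] cinner_self by (simp add: field_simps power2_eq_square)
  also have "\<dots> = complex_of_real ((norm x)\<^sup>2 - (cmod c)\<^sup>2 / n)"
    unfolding cc by simp
  finally show ?thesis unfolding cinner_self of_real_eq_iff t_def c_def n_def .
qed

lemma parallelogram:
  fixes a b :: "'a::chilbert"
  shows "(norm (a + b))\<^sup>2 + (norm (a - b))\<^sup>2 = 2 * (norm a)\<^sup>2 + 2 * (norm b)\<^sup>2"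
proof -
  have "cinner (a + b) (a + b) + cinner (a - b) (a - b) = 2 * cinner a a + 2 * cinner b b"
    unfolding cinner_add_left cinner_add_right cinner_diff_left cinner_diff_right by simp
  hence "complex_of_real ((norm (a + b))\<^sup>2 + (norm (a - b))\<^sup>2)
      = complex_of_real (2 * (norm a)\<^sup>2 + 2 * (norm b)\<^sup>2)" unfolding cinner_self by simp
  thus ?thesis unfolding of_real_eq_iff .
qed

lemma csubspace_scaleR: "csubspace M \<Longrightarrow> x \<in> M \<Longrightarrow> scaleR r x \<in> M"
  unfolding csubspace_def scaleR_scaleC by blast
lemma csubspace_diff: "csubspace M \<Longrightarrow> x \<in> M \<Longrightarrow> y \<in> M \<Longrightarrow> x - y \<in> M"
proof -
  assume a: "csubspace M" "x \<in> M" "y \<in> M"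
  have "scaleC (-1) y = - y" using scaleC_minus_left[of 1 y] by (simp add: scaleC_one)
  hence "x - y = x + scaleC (-1) y" by simp
  thus ?thesis using a unfolding csubspace_def by metis
qed

lemma proj_exists:
  fixes M :: "'a::chilbert set"
  assumes sub: "csubspace M" and cl: "closed M"
  shows "\<exists>p\<in>M. \<forall>m\<in>M. cinner (x - p) m = 0"
proof -
  define D where "D = (\<lambda>m. norm (x - m)) ` M"
  define d where "d = Inf D"
  have D0: "D \<noteq> {}" using sub unfolding D_def csubspace_def by auto
  have Db: "bdd_below D" unfolding D_def by (rule bdd_belowI[of _ 0]) auto
  have dle: "d \<le> norm (x - m)" if "m \<in> M" for m
    unfolding d_def using Db that by (auto intro: cInf_lower simp: D_def)
  have d0: "d \<ge> 0" unfolding d_def using D0 by (intro cInf_greatest) (auto simp: D_def)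
  have "\<exists>m\<in>M. (norm (x - m))\<^sup>2 < d\<^sup>2 + inverse (real (Suc n))" for n
  proof -
    have "d < sqrt (d\<^sup>2 + inverse (real (Suc n)))"
      using d0 by (metis add.right_neutral add_less_cancel_left inverse_positive_iff_positive
         of_nat_0_less_iff real_less_rsqrt zero_less_Suc)
    hence "\<exists>y\<in>D. y < sqrt (d\<^sup>2 + inverse (real (Suc n)))"
      using cInf_less_iff[OF D0 Db] unfolding d_def by blast
    then obtain m where m: "m \<in> M" "norm (x - m) < sqrt (d\<^sup>2 + inverse (real (Suc n)))"
      unfolding D_def by blast
    hence "(norm (x - m))\<^sup>2 < d\<^sup>2 + inverse (real (Suc n))"
      by (metis norm_ge_zero real_sqrt_less_iff real_sqrt_pow2_iff real_sqrt_unique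
          abs_of_nonneg less_le_trans not_le real_less_lsqrt)
    thus ?thesis using m by blast
  qed
  then obtain u where u: "\<And>n. u n \<in> M" "\<And>n. (norm (x - u n))\<^sup>2 < d\<^sup>2 + inverse (real (Suc n))"
    by metis
  have key: "(norm (u k - u l))\<^sup>2 \<le> 2 * inverse (real (Suc k)) + 2 * inverse (real (Suc l))" for k l
  proof -
    have mid: "scaleR (1/2) (u k + u l) \<in> M"
      using sub u(1) by (metis csubspace_def csubspace_scaleR)
    have "2 * d \<le> 2 * norm (x - scaleR (1/2) (u k + u l))" using dle[OF mid] by simp
    also have "2 * norm (x - scaleR (1/2) (u k + u l)) = norm ((x - u k) + (x - u l))"
    proof -
      have "(x - u k) + (x - u l) = scaleR 2 (x - scaleR (1/2) (u k + u l))"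
        by (simp add: algebra_simps scaleR_2)
      thus ?thesis by simp
    qed
    finally have "(2 * d)\<^sup>2 \<le> (norm ((x - u k) + (x - u l)))\<^sup>2"
      using d0 by (intro power_mono) auto
    moreover have "(norm ((x - u k) + (x - u l)))\<^sup>2 + (norm ((x - u k) - (x - u l)))\<^sup>2
        = 2 * (norm (x - u k))\<^sup>2 + 2 * (norm (x - u l))\<^sup>2" by (rule parallelogram)
    moreover have "(x - u k) - (x - u l) = u l - u k" by simp
    moreover have "norm (u l - u k) = norm (u k - u l)" by (rule norm_minus_commute)
    ultimately show ?thesis using u(2)[of k] u(2)[of l] by (simp add: power_mult_distrib)
  qed
  have "Cauchy u"
  proof (rule CauchyI)
    fix e :: real assume e: "e > 0"
    obtain N where N: "inverse (real (Suc N)) < e\<^sup>2 / 4"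
      using e by (metis reals_Archimedean zero_less_divide_iff zero_less_numeral zero_less_power)
    have "norm (u m - u n) < e" if "m \<ge> N" "n \<ge> N" for m n
    proof -
      have "inverse (real (Suc m)) \<le> inverse (real (Suc N))" "inverse (real (Suc n)) \<le> inverse (real (Suc N))"
        using that by (auto intro!: le_imp_inverse_le)
      hence "(norm (u m - u n))\<^sup>2 < e\<^sup>2" using key[of m n] N by linarith
      thus ?thesis using e power2_less_imp_less[of "norm (u m - u n)" e] by simp
    qed
    thus "\<exists>M. \<forall>m\<ge>M. \<forall>n\<ge>M. norm (u m - u n) < e" by blast
  qed
  then obtain p where p: "u \<longlonglongrightarrow> p" using Cauchy_convergent_iff convergent_def by blast
  have pM: "p \<in> M" using closed_sequentially[OF cl u(1) p] .
  have "(\<lambda>n. (norm (x - u n))\<^sup>2) \<longlonglongrightarrow> (norm (x - p))\<^sup>2"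
    by (intro tendsto_intros p)
  moreover have "(\<lambda>n. d\<^sup>2 + inverse (real (Suc n))) \<longlonglongrightarrow> d\<^sup>2 + 0"
    by (intro tendsto_intros LIMSEQ_inverse_real_of_nat)
  ultimately have pd: "(norm (x - p))\<^sup>2 \<le> d\<^sup>2"
    using u(2) by (intro LIMSEQ_le) (auto intro: less_imp_le)
  have "cinner (x - p) m = 0" if m: "m \<in> M" for m
  proof (rule ccontr)
    assume nz: "cinner (x - p) m \<noteq> 0"
    hence m0: "m \<noteq> 0" by auto
    define s where "s = cinner (x - p) m / complex_of_real ((norm m)\<^sup>2)"
    have "p + scaleC s m \<in> M" using sub pM m unfolding csubspace_def by blast
    hence "d \<le> norm (x - (p + scaleC s m))" by (rule dle)
    hence "d\<^sup>2 \<le> (norm (x - p - scaleC s m))\<^sup>2" using d0 by (simp add: power_mono algebra_simps)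
    also have "\<dots> = (norm (x - p))\<^sup>2 - (cmod (cinner (x - p) m))\<^sup>2 / (norm m)\<^sup>2"
      unfolding s_def by (rule norm_sub_proj[OF m0])
    finally have "(cmod (cinner (x - p) m))\<^sup>2 / (norm m)\<^sup>2 \<le> 0" using pd by linarith
    moreover have "(cmod (cinner (x - p) m))\<^sup>2 / (norm m)\<^sup>2 > 0" using nz m0 by simp
    ultimately show False by linarith
  qed
  thus ?thesis using pM by blast
qed


section \<open>Linear relations and adjoints\<close>

lemma lin_add: "linear_relation T \<Longrightarrow> (a, b) \<in> T \<Longrightarrow> (c, d) \<in> T \<Longrightarrow> (a + c, b + d) \<in> T"
  unfolding linear_relation_def by fastforce
lemma lin_scale: "linear_relation T \<Longrightarrow> (a, b) \<in> T \<Longrightarrow> (scaleC r a, scaleC r b) \<in> T"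
  unfolding linear_relation_def by fastforce
lemma lin_zero: "linear_relation T \<Longrightarrow> (0, 0) \<in> T"
  unfolding linear_relation_def by fastforce
lemma scaleC_minus1: "scaleC (-1) (y::'a::chilbert) = - y"
  using scaleC_minus_left[of 1 y] by (simp add: scaleC_one)
lemma lin_minus: "linear_relation T \<Longrightarrow> (a, b) \<in> T \<Longrightarrow> (- a, - b) \<in> T"
  using lin_scale[of T a b "-1"] by (simp add: scaleC_minus1)
lemma lin_diff: "linear_relation T \<Longrightarrow> (a, b) \<in> T \<Longrightarrow> (c, d) \<in> T \<Longrightarrow> (a - c, b - d) \<in> T"
  using lin_add[of T a b "- c" "- d"] lin_minus[of T c d] by simp

lemma csubspace_iff_lin: "csubspace T \<longleftrightarrow> linear_relation T"
  unfolding csubspace_def linear_relation_def zero_prod_def plus_prod_def scaleC_prod_def by simp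

lemma cinner_swap: "cinner a b = cinner c d \<Longrightarrow> cinner b a = cinner d c"
  by (subst cinner_commute, subst (2) cinner_commute, simp)

lemma adj_iff: "(h, k) \<in> adj T \<longleftrightarrow> (\<forall>f g. (f, g) \<in> T \<longrightarrow> cinner g h = cinner f k)"
  unfolding adj_def by auto

lemma adj_linear: "linear_relation (adj T)"
  unfolding linear_relation_def
  by (auto simp: adj_iff cinner_add_right cinner_scaleC_right)

lemma adj_closed: "closed (adj T)"
proof -
  have "adj T = (\<Inter>p\<in>T. {q. cinner (snd p) (fst q) = cinner (fst p) (snd q)})"
    by (force simp: adj_iff)
  also have "closed \<dots>"
    by (intro closed_INT ballI closed_Collect_eq continuous_on_cinner continuous_intros)
  finally show ?thesis .
qed

lemma adj_antimono: "T \<subseteq> T' \<Longrightarrow> adj T' \<subseteq> adj T"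
  unfolding adj_def by auto

lemma adj_adj_sup: "T \<subseteq> adj (adj T)"
proof
  fix p assume p: "p \<in> T"
  obtain f g where fg: "p = (f, g)" by fastforce
  show "p \<in> adj (adj T)" unfolding fg
  proof (subst adj_iff, intro allI impI)
    fix h k assume "(h, k) \<in> adj T"
    hence "cinner g h = cinner f k" using p fg adj_iff by blast
    thus "cinner k f = cinner h g" by (metis cinner_commute)
  qed
qed

lemma adj3: "adj (adj (adj T)) = adj T"
  using adj_adj_sup[of T] adj_adj_sup[of "adj T"] adj_antimono by blast

lemma adj_adj_closed:
  assumes lin: "linear_relation C" and cl: "closed C"
  shows "adj (adj C) = C"
proof
  show "C \<subseteq> adj (adj C)" by (rule adj_adj_sup)
  show "adj (adj C) \<subseteq> C"
  proof
    fix z assume z: "z \<in> adj (adj C)"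
    obtain x y where xy: "z = (x, y)" by fastforce
    obtain p where pC: "p \<in> C" and orth: "\<forall>m\<in>C. cinner (z - p) m = 0"
      using proj_exists[of C z] lin cl by (auto simp: csubspace_iff_lin)
    obtain a b where ab: "p = (a, b)" by fastforce
    define p1 where "p1 = x - a"
    define q1 where "q1 = y - b"
    have o: "cinner p1 f + cinner q1 g = 0" if "(f, g) \<in> C" for f g
      using orth that unfolding xy ab p1_def q1_def by (auto simp: cinner_Pair)
    have "(q1, - p1) \<in> adj C" unfolding adj_iff
    proof (intro allI impI)
      fix f g assume "(f, g) \<in> C"
      hence "cinner q1 g = - cinner p1 f" using o by (simp add: eq_neg_iff_add_eq_0 add.commute)
      hence "cinner g q1 = - cnj (cinner p1 f)" by (metis cinner_commute complex_cnj_minus)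
      thus "cinner g q1 = cinner f (- p1)" by (metis cinner_commute cinner_minus_right)
    qed
    hence e1: "cinner (- p1) x = cinner q1 y" using z unfolding xy adj_iff by blast
    have "(a, b) \<in> adj (adj C)" using pC ab adj_adj_sup by blast
    hence e2: "cinner (- p1) a = cinner q1 b" using \<open>(q1, - p1) \<in> adj C\<close> unfolding adj_iff by blast
    have "cinner (- p1) p1 = cinner q1 q1"
      using e1 e2 unfolding p1_def q1_def cinner_diff_right by simp
    hence "- cinner p1 p1 = cinner q1 q1" by (simp add: cinner_minus_left)
    hence "- (norm p1)\<^sup>2 = (norm q1)\<^sup>2" unfolding cinner_self
      by (metis of_real_eq_iff of_real_minus)
    hence "norm p1 = 0" "norm q1 = 0"
      by (smt (verit) zero_le_power2 zero_eq_power2)+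
    hence "x = a" "y = b" unfolding p1_def q1_def by auto
    thus "z \<in> C" using pC ab xy by simp
  qed
qed

lemma adj_mul_perp: "(0, m) \<in> adj T \<Longrightarrow> (f, g) \<in> T \<Longrightarrow> cinner f m = 0"
  unfolding adj_iff by (metis cinner_zero_right)
lemma adj_dom_perp: "(h, k) \<in> adj T \<Longrightarrow> (0, m) \<in> T \<Longrightarrow> cinner m h = 0"
  unfolding adj_iff by (metis cinner_zero_left)


section \<open>Products, shifts, von Neumann\<close>

lemma rprod_iff: "(f, h) \<in> rprod R T \<longleftrightarrow> (\<exists>g. (f, g) \<in> T \<and> (g, h) \<in> R)"
  unfolding rprod_def by auto

lemma rshift_iff: "(x, y) \<in> rshift c A \<longleftrightarrow> (x, y - scaleC (complex_of_real c) x) \<in> A"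
  unfolding rshift_def by force

lemma adj_rshift: "adj (rshift c A) = rshift c (adj A)"
proof (rule set_eqI)
  fix z :: "'a \<times> 'a" obtain h k where z: "z = (h, k)" by fastforce
  have "z \<in> adj (rshift c A) \<longleftrightarrow>
     (\<forall>f g. (f, g) \<in> A \<longrightarrow> cinner (g + scaleC (complex_of_real c) f) h = cinner f k)"
    unfolding z adj_iff rshift_iff
  proof (intro iffI allI impI)
    fix f g
    assume H: "\<forall>f g. (f, g - scaleC (complex_of_real c) f) \<in> A \<longrightarrow> cinner g h = cinner f k"
      and fg: "(f, g) \<in> A"
    show "cinner (g + scaleC (complex_of_real c) f) h = cinner f k"
      using H[rule_format, of f "g + scaleC (complex_of_real c) f"] fg by simp
  next
    fix f g
    assume H: "\<forall>f g. (f, g) \<in> A \<longrightarrow> cinner (g + scaleC (complex_of_real c) f) h = cinner f k"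
      and fg: "(f, g - scaleC (complex_of_real c) f) \<in> A"
    show "cinner g h = cinner f k"
      using H[rule_format, OF fg] by simp
  qed
  also have "\<dots> \<longleftrightarrow> (\<forall>f g. (f, g) \<in> A \<longrightarrow> cinner g h = cinner f (k - scaleC (complex_of_real c) h))"
    unfolding cinner_add_left cinner_diff_right cinner_scaleC_left cinner_scaleC_right
    by (simp add: eq_diff_eq)
  also have "\<dots> \<longleftrightarrow> z \<in> rshift c (adj A)" unfolding z rshift_iff adj_iff ..
  finally show "z \<in> adj (rshift c A) \<longleftrightarrow> z \<in> rshift c (adj A)" .
qed

lemma selfadjoint_rshift: "selfadjoint A \<Longrightarrow> selfadjoint (rshift c A)"
  unfolding selfadjoint_def adj_rshift by simp

lemma vN_surj:
  assumes lin: "linear_relation T" and cl: "closed T"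
  shows "\<exists>f p. (f, p) \<in> rprod (adj T) T \<and> h = f + p"
proof -
  have sT: "csubspace T" using lin csubspace_iff_lin by blast
  obtain q where qT: "q \<in> T" and orth: "\<forall>m\<in>T. cinner ((h, 0) - q) m = 0"
    using proj_exists[OF sT cl, of "(h, 0)"] by blast
  obtain f g where q: "q = (f, g)" by fastforce
  have "(g, h - f) \<in> adj T" unfolding adj_iff
  proof (intro allI impI)
    fix f' g' assume "(f', g') \<in> T"
    hence "cinner ((h, 0) - q) (f', g') = 0" using orth by blast
    hence "cinner (h - f) f' + cinner (- g) g' = 0" unfolding q by (simp add: cinner_Pair)
    hence "cinner (h - f) f' = cinner g g'" unfolding cinner_minus_left
      by (simp add: add_eq_0_iff)
    thus "cinner g' g = cinner f' (h - f)" by (rule cinner_swap[symmetric])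
  qed
  hence "(f, h - f) \<in> rprod (adj T) T" unfolding rprod_iff using qT q by blast
  moreover have "h = f + (h - f)" by simp
  ultimately show ?thesis by blast
qed

lemma vN_selfadjoint:
  assumes lin: "linear_relation T" and cl: "closed T"
  shows "selfadjoint (rprod (adj T) T)"
proof -
  define A where "A = rprod (adj T) T"
  have sub: "A \<subseteq> adj A"
  proof
    fix z assume "z \<in> A"
    then obtain f p g where z: "z = (f, p)" and fg: "(f, g) \<in> T" and gp: "(g, p) \<in> adj T"
      unfolding A_def rprod_def by blast
    show "z \<in> adj A" unfolding z adj_iff
    proof (intro allI impI)
      fix f' p' assume "(f', p') \<in> A"
      then obtain g' where fg': "(f', g') \<in> T" and gp': "(g', p') \<in> adj T"
        unfolding A_def rprod_iff by blast
      have "cinner g g' = cinner f p'" using gp' fg adj_iff by blast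
      moreover have "cinner g' g = cinner f' p" using gp fg' adj_iff by blast
      ultimately show "cinner p' f = cinner f' p" using cinner_swap by metis
    qed
  qed
  have "adj A \<subseteq> A"
  proof
    fix z assume z: "z \<in> adj A"
    obtain h k where hk: "z = (h, k)" by fastforce
    obtain f p where fp: "(f, p) \<in> A" and e: "h + k = f + p"
      using vN_surj[OF lin cl, of "h + k"] unfolding A_def by blast
    define d where "d = h - f"
    have "(h - f, k - p) \<in> adj A" using lin_diff[OF adj_linear] z hk fp sub by blast
    moreover have "k - p = - d" using e unfolding d_def by (simp add: algebra_simps)
    ultimately have dd: "(d, - d) \<in> adj A" unfolding d_def by simp
    have "cinner (f'' + p'') d = 0" if "(f'', p'') \<in> A" for f'' p''
    proof -
      have "cinner p'' d = cinner f'' (- d)" using dd that adj_iff by blast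
      thus ?thesis by (simp add: cinner_add_left cinner_minus_right)
    qed
    moreover obtain f'' p'' where "(f'', p'') \<in> A" "d = f'' + p''"
      using vN_surj[OF lin cl, of d] unfolding A_def by blast
    ultimately have "cinner d d = 0" by blast
    hence "d = 0" by simp
    hence "h = f" "k = p" using e unfolding d_def by auto
    thus "z \<in> A" using fp hk by simp
  qed
  thus ?thesis using sub unfolding selfadjoint_def A_def by blast
qed

lemma rprod_adj_value:
  assumes "(f, g) \<in> T" "(g, p) \<in> adj T"
  shows "cinner p f = complex_of_real ((norm g)\<^sup>2)"
proof -
  have "cinner g g = cinner f p" using assms adj_iff by blast
  hence "cinner p f = cinner g g" by (rule cinner_swap[symmetric])
  thus ?thesis by (simp add: cinner_self)
qed

lemma bounded_below_shift_prod: "bounded_below_by (rshift c (rprod (adj T) T)) c"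
  unfolding bounded_below_by_def
proof (clarify)
  fix x y assume "(x, y) \<in> rshift c (rprod (adj T) T)"
  then obtain g where xg: "(x, g) \<in> T" and gy: "(g, y - scaleC (complex_of_real c) x) \<in> adj T"
    unfolding rshift_iff rprod_iff by blast
  have "cinner y x = cinner (y - scaleC (complex_of_real c) x) x + complex_of_real c * cinner x x"
    by (simp add: cinner_diff_left cinner_scaleC_left)
  also have "\<dots> = complex_of_real ((norm g)\<^sup>2 + c * (norm x)\<^sup>2)"
    using rprod_adj_value[OF xg gy] by (simp add: cinner_self)
  finally show "Im (cinner y x) = 0 \<and> c * (norm x)\<^sup>2 \<le> Re (cinner y x)" by simp
qed


section \<open>Projections and regular parts\<close>

lemma oproj_unique:
  assumes sub: "csubspace M" and p: "p \<in> M" "\<forall>m\<in>M. cinner (g - p) m = 0"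
    and p': "p' \<in> M" "\<forall>m\<in>M. cinner (g - p') m = 0"
  shows "p = p'"
proof -
  have d: "p' - p \<in> M" using csubspace_diff[OF sub p'(1) p(1)] .
  have "cinner (g - p) (p' - p) - cinner (g - p') (p' - p) = 0" using p(2) p'(2) d by simp
  hence "cinner (p' - p) (p' - p) = 0" unfolding cinner_diff_left[symmetric] by simp
  thus ?thesis by simp
qed

lemma oproj:
  assumes sub: "csubspace M" and cl: "closed M"
  shows "oproj M g \<in> M \<and> (\<forall>m\<in>M. cinner (g - oproj M g) m = 0)"
proof -
  obtain p where p: "p \<in> M" "\<forall>m\<in>M. cinner (g - p) m = 0" using proj_exists[OF sub cl] by blast
  show ?thesis unfolding oproj_def
    by (rule theI[of _ p]) (use p oproj_unique[OF sub] in blast)+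
qed

lemma oproj_eq:
  assumes sub: "csubspace M" and cl: "closed M" and p: "p \<in> M" "\<forall>m\<in>M. cinner (g - p) m = 0"
  shows "oproj M g = p"
  using oproj[OF sub cl, of g] oproj_unique[OF sub] p by blast

lemma rmul_csubspace: "linear_relation T \<Longrightarrow> csubspace (rmul T)"
  unfolding csubspace_def rmul_def using lin_add lin_scale lin_zero
  by (metis add_0 scaleC_zero_right mem_Collect_eq)

lemma rmul_closed:
  fixes T :: "('a::chilbert \<times> 'b::chilbert) set"
  assumes cl: "closed T" shows "closed (rmul T)"
proof -
  have "rmul T = (\<lambda>g. (0, g)) -` T" unfolding rmul_def by auto
  also have "closed \<dots>" by (rule continuous_closed_vimage[OF cl]) (intro continuous_intros)
  finally show ?thesis .
qed

context
  fixes T :: "('a::chilbert \<times> 'b::chilbert) set"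
  assumes lin: "linear_relation T" and cl: "closed T"
begin

lemma M_sub: "csubspace (rmul T)" using rmul_csubspace[OF lin] .
lemma M_cl: "closed (rmul T)" using rmul_closed[OF cl] .

lemma rreg_char: "rreg T = {(f, g). (f, g) \<in> T \<and> (\<forall>m\<in>rmul T. cinner g m = 0)}"
proof (rule set_eqI)
  fix z :: "'a \<times> 'b" obtain f g where z: "z = (f, g)" by fastforce
  show "z \<in> rreg T \<longleftrightarrow> z \<in> {(f, g). (f, g) \<in> T \<and> (\<forall>m\<in>rmul T. cinner g m = 0)}"
  proof
    assume "z \<in> rreg T"
    then obtain g0 where g0: "(f, g0) \<in> T" and g: "g = g0 - oproj (rmul T) g0"
      unfolding rreg_def z by blast
    have pr: "oproj (rmul T) g0 \<in> rmul T" "\<forall>m\<in>rmul T. cinner g m = 0"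
      using oproj[OF M_sub M_cl, of g0] g by auto
    have "(0, oproj (rmul T) g0) \<in> T" using pr(1) unfolding rmul_def by simp
    hence "(f - 0, g0 - oproj (rmul T) g0) \<in> T" using lin_diff[OF lin g0] by blast
    thus "z \<in> {(f, g). (f, g) \<in> T \<and> (\<forall>m\<in>rmul T. cinner g m = 0)}" using z g pr by simp
  next
    assume "z \<in> {(f, g). (f, g) \<in> T \<and> (\<forall>m\<in>rmul T. cinner g m = 0)}"
    hence fg: "(f, g) \<in> T" and o: "\<forall>m\<in>rmul T. cinner g m = 0" using z by auto
    have "0 \<in> rmul T" using M_sub unfolding csubspace_def by blast
    hence "oproj (rmul T) g = 0" using oproj_eq[OF M_sub M_cl, of 0 g] o by simp
    hence "g = g - oproj (rmul T) g" by simp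
    thus "z \<in> rreg T" unfolding rreg_def z using fg by blast
  qed
qed

lemma rreg_sub: "rreg T \<subseteq> T" using rreg_char by auto

lemma rreg_closed: "closed (rreg T)"
proof -
  have "rreg T = T \<inter> (\<Inter>m\<in>rmul T. {p. cinner (snd p) m = 0})" unfolding rreg_char by auto
  also have "closed \<dots>"
    by (intro closed_Int cl closed_INT ballI closed_Collect_eq continuous_on_cinner continuous_intros)
  finally show ?thesis .
qed

lemma rreg_operator: "is_operator (rreg T)"
proof -
  have "linear_relation (rreg T)" unfolding linear_relation_def rreg_char
    using lin_add[OF lin] lin_scale[OF lin] lin_zero[OF lin]
    by (auto simp: cinner_add_left cinner_scaleC_left)
  moreover have "rmul (rreg T) = {0}"
  proof -
    have "k = 0" if "(0, k) \<in> rreg T" for k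
    proof -
      have "k \<in> rmul T" "\<forall>m\<in>rmul T. cinner k m = 0" using that unfolding rreg_char rmul_def by auto
      hence "cinner k k = 0" by blast
      thus ?thesis by simp
    qed
    moreover have "(0, 0) \<in> rreg T" unfolding rreg_char using lin_zero[OF lin] by simp
    ultimately show ?thesis unfolding rmul_def by auto
  qed
  ultimately show ?thesis unfolding is_operator_def by blast
qed

lemma rprod_rreg: "rprod (adj (rreg T)) (rreg T) = rprod (adj T) T"
proof (rule set_eqI)
  fix z :: "'a \<times> 'a" obtain f h where z: "z = (f, h)" by fastforce
  let ?M = "rmul T"
  show "z \<in> rprod (adj (rreg T)) (rreg T) \<longleftrightarrow> z \<in> rprod (adj T) T"
  proof
    assume "z \<in> rprod (adj (rreg T)) (rreg T)"
    then obtain g where fg: "(f, g) \<in> rreg T" and gh: "(g, h) \<in> adj (rreg T)"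
      unfolding z rprod_iff by blast
    have "(g, h) \<in> adj T" unfolding adj_iff
    proof (intro allI impI)
      fix f' g' assume fg': "(f', g') \<in> T"
      define p where "p = oproj ?M g'"
      have pM: "p \<in> ?M" "\<forall>m\<in>?M. cinner (g' - p) m = 0" using oproj[OF M_sub M_cl] p_def by auto
      have "(f', g' - p) \<in> rreg T" unfolding rreg_def p_def using fg' by blast
      hence "cinner (g' - p) g = cinner f' h" using gh adj_iff by blast
      moreover have "cinner p g = 0"
        using fg pM(1) unfolding rreg_char by (auto intro: cinner_swap[of g p 0 0, simplified])
      ultimately show "cinner g' g = cinner f' h" by (simp add: cinner_diff_left)
    qed
    thus "z \<in> rprod (adj T) T" unfolding z rprod_iff using fg rreg_sub by blast
  next
    assume "z \<in> rprod (adj T) T"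
    then obtain g where fg: "(f, g) \<in> T" and gh: "(g, h) \<in> adj T"
      unfolding z rprod_iff by blast
    have perp: "cinner g m = 0" if "m \<in> ?M" for m
      using adj_dom_perp[OF gh, of m] that unfolding rmul_def
      by (auto intro: cinner_swap[of m g 0 0, simplified])
    have "(f, g) \<in> rreg T" unfolding rreg_char using fg perp by blast
    moreover have "(g, h) \<in> adj (rreg T)" using gh adj_antimono[OF rreg_sub] by blast
    ultimately show "z \<in> rprod (adj (rreg T)) (rreg T)" unfolding z rprod_iff by blast
  qed
qed

end

lemma operator_fun: "is_operator T \<Longrightarrow> (f, g) \<in> T \<Longrightarrow> (f, g') \<in> T \<Longrightarrow> g = g'"
proof -
  assume op: "is_operator T" and a: "(f, g) \<in> T" "(f, g') \<in> T"
  have "(f - f, g - g') \<in> T" using lin_diff[OF _ a] op unfolding is_operator_def by blast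
  hence "g - g' \<in> rmul T" unfolding rmul_def by simp
  thus ?thesis using op unfolding is_operator_def by simp
qed


section \<open>Forms of c + T*T\<close>

lemma rform_fst [simp]: "fst (rform S) = rdom S" unfolding rform_def by simp
lemma rform_snd: "snd (rform S) \<phi> \<psi> = cinner (SOME \<phi>'. (\<phi>, \<phi>') \<in> S) \<psi>"
  unfolding rform_def by simp
lemma rform_some: "\<phi> \<in> rdom S \<Longrightarrow> (\<phi>, SOME \<phi>'. (\<phi>, \<phi>') \<in> S) \<in> S"
  unfolding rdom_def by (auto intro: someI)

lemma rdom_diff: "linear_relation S \<Longrightarrow> a \<in> rdom S \<Longrightarrow> b \<in> rdom S \<Longrightarrow> a - b \<in> rdom S"
  unfolding rdom_def using lin_diff by blast
lemma rdom_add: "linear_relation S \<Longrightarrow> a \<in> rdom S \<Longrightarrow> b \<in> rdom S \<Longrightarrow> a + b \<in> rdom S"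
  unfolding rdom_def using lin_add by blast
lemma rdom_scale: "linear_relation S \<Longrightarrow> a \<in> rdom S \<Longrightarrow> scaleC r a \<in> rdom S"
  unfolding rdom_def using lin_scale by blast
lemma rdom_zero: "linear_relation S \<Longrightarrow> 0 \<in> rdom S"
  unfolding rdom_def using lin_zero by blast
lemma rdomI: "(a, b) \<in> S \<Longrightarrow> a \<in> rdom S" unfolding rdom_def by blast

lemma form_approx_iff: "form_approx t u x \<longleftrightarrow> (\<forall>n. u n \<in> fst t) \<and> u \<longlonglongrightarrow> x \<and>
     (\<forall>e>0. \<exists>N. \<forall>m\<ge>N. \<forall>n\<ge>N. cmod (snd t (u n - u m) (u n - u m)) < e)"
  unfolding form_approx_def ..

lemma closed_form_fst: "fst (closed_form S) = {x. \<exists>u. form_approx (rform S) u x}"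
  unfolding closed_form_def form_closure_def by simp
lemma closed_form_snd: "snd (closed_form S) x y =
   lim (\<lambda>n. snd (rform S) ((SOME u. form_approx (rform S) u x) n) ((SOME u. form_approx (rform S) u y) n))"
  unfolding closed_form_def form_closure_def by simp

lemma small_sq:
  fixes e c :: real assumes e: "e > 0"
  shows "\<exists>\<delta>>0. \<forall>r::real. 0 \<le> r \<longrightarrow> r < \<delta> \<longrightarrow> \<bar>c\<bar> * r\<^sup>2 < e"
proof -
  define \<delta> where "\<delta> = sqrt (e / (\<bar>c\<bar> + 1))"
  have d: "\<delta> > 0" using e by (simp add: \<delta>_def)
  have "\<bar>c\<bar> * r\<^sup>2 < e" if "0 \<le> r" "r < \<delta>" for r
  proof -
    have "r\<^sup>2 < \<delta>\<^sup>2" using that by (simp add: power_strict_mono)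
    also have "\<delta>\<^sup>2 = e / (\<bar>c\<bar> + 1)" using e by (simp add: \<delta>_def)
    finally have "r\<^sup>2 < e / (\<bar>c\<bar> + 1)" .
    hence "(\<bar>c\<bar> + 1) * r\<^sup>2 < e"
      by (simp add: pos_less_divide_eq mult.commute add_pos_nonneg)
    moreover have "\<bar>c\<bar> * r\<^sup>2 \<le> (\<bar>c\<bar> + 1) * r\<^sup>2" by (intro mult_right_mono) auto
    ultimately show ?thesis by linarith
  qed
  thus ?thesis using d by blast
qed

lemma bounded_linear_scaleC: "bounded_linear (scaleC a :: 'a::chilbert \<Rightarrow> 'a)"
proof (rule bounded_linear_intro[where K = "cmod a"])
  fix x y :: 'a and r :: real
  show "scaleC a (x + y) = scaleC a x + scaleC a y" by (rule scaleC_add_right)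
  show "scaleC a (scaleR r x) = scaleR r (scaleC a x)"
    unfolding scaleR_scaleC scaleC_scaleC by (simp add: mult.commute)
  show "norm (scaleC a x) \<le> norm x * cmod a" by (simp add: norm_scaleC mult.commute)
qed

lemma closure_csubspace:
  fixes M :: "'a::chilbert set"
  assumes M: "csubspace M" shows "csubspace (closure M)"
  unfolding csubspace_def
proof (intro conjI ballI allI)
  show "0 \<in> closure M" using M closure_subset unfolding csubspace_def by blast
next
  fix x y assume "x \<in> closure M" "y \<in> closure M"
  then obtain a b where a: "\<forall>n. a n \<in> M" "a \<longlonglongrightarrow> x" and b: "\<forall>n. b n \<in> M" "b \<longlonglongrightarrow> y"
    unfolding closure_sequential by blast
  have "\<forall>n. a n + b n \<in> M" using a b M unfolding csubspace_def by blast
  moreover have "(\<lambda>n. a n + b n) \<longlonglongrightarrow> x + y" using a b by (intro tendsto_intros) auto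
  ultimately show "x + y \<in> closure M" unfolding closure_sequential by (intro exI[of _ "\<lambda>n. a n + b n"]) simp
next
  fix r x assume "x \<in> closure M"
  then obtain a where a: "\<forall>n. a n \<in> M" "a \<longlonglongrightarrow> x" unfolding closure_sequential by blast
  have "\<forall>n. scaleC r (a n) \<in> M" using a M unfolding csubspace_def by blast
  moreover have "(\<lambda>n. scaleC r (a n)) \<longlonglongrightarrow> scaleC r x"
    using bounded_linear.tendsto[OF bounded_linear_scaleC a(2)] .
  ultimately show "scaleC r x \<in> closure M" unfolding closure_sequential by (intro exI[of _ "\<lambda>n. scaleC r (a n)"]) simp
qed

definition AA :: "('a::chilbert \<times> 'b::chilbert) set \<Rightarrow> real \<Rightarrow> ('a \<times> 'a) set" where
  "AA T c = rshift c (rprod (adj T) T)"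

context
  fixes T :: "('a::chilbert \<times> 'b::chilbert) set" and c :: real
  assumes lin: "linear_relation T" and cl: "closed T" and op: "is_operator T"
begin


lemma AA_sa: "selfadjoint (AA T c)"
  unfolding AA_def by (rule selfadjoint_rshift[OF vN_selfadjoint[OF lin cl]])

lemma AA_lin: "linear_relation (AA T c)"
  using AA_sa adj_linear unfolding selfadjoint_def by metis

lemma AA_dom: "rdom (AA T c) \<subseteq> rdom T"
  unfolding AA_def rdom_def rshift_iff rprod_iff by blast

lemma AA_val:
  assumes "(\<phi>, g) \<in> T" "(\<psi>, b) \<in> T" "\<phi> \<in> rdom (AA T c)"
  shows "snd (rform (AA T c)) \<phi> \<psi> = complex_of_real c * cinner \<phi> \<psi> + cinner g b"
proof -
  define \<phi>' where "\<phi>' = (SOME \<phi>'. (\<phi>, \<phi>') \<in> (AA T c))"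
  have "(\<phi>, \<phi>') \<in> (AA T c)" using rform_some[OF assms(3)] \<phi>'_def by simp
  then obtain g' where g': "(\<phi>, g') \<in> T" "(g', \<phi>' - scaleC (complex_of_real c) \<phi>) \<in> adj T"
    unfolding AA_def rshift_iff rprod_iff by blast
  have "g' = g" using operator_fun[OF op g'(1) assms(1)] .
  hence "cinner b g = cinner \<psi> (\<phi>' - scaleC (complex_of_real c) \<phi>)"
    using g'(2) assms(2) adj_iff by blast
  hence "cinner (\<phi>' - scaleC (complex_of_real c) \<phi>) \<psi> = cinner g b" by (rule cinner_swap[symmetric])
  hence "cinner \<phi>' \<psi> = complex_of_real c * cinner \<phi> \<psi> + cinner g b"
    unfolding cinner_diff_left cinner_scaleC_left by (simp add: algebra_simps)
  thus ?thesis unfolding rform_snd \<phi>'_def .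
qed

lemma approx_graph:
  assumes ap: "form_approx (rform (AA T c)) u x" and w: "\<And>n. (u n, w n) \<in> T"
  shows "\<exists>a. (x, a) \<in> T \<and> w \<longlonglongrightarrow> a"
proof -
  have uA: "\<And>n. u n \<in> rdom (AA T c)" and ux: "u \<longlonglongrightarrow> x"
    and cau: "\<And>e. e > 0 \<Longrightarrow> \<exists>N. \<forall>m\<ge>N. \<forall>n\<ge>N. cmod (snd (rform (AA T c)) (u n - u m) (u n - u m)) < e"
    using ap unfolding form_approx_iff by auto
  have val: "(norm (w n - w m))\<^sup>2 \<le> cmod (snd (rform (AA T c)) (u n - u m) (u n - u m)) + \<bar>c\<bar> * (norm (u n - u m))\<^sup>2"
    for n m
  proof -
    have d: "u n - u m \<in> rdom (AA T c)" using rdom_diff[OF AA_lin uA uA] .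
    have dw: "(u n - u m, w n - w m) \<in> T" using lin_diff[OF lin w w] .
    have "snd (rform (AA T c)) (u n - u m) (u n - u m) = complex_of_real (c * (norm (u n - u m))\<^sup>2 + (norm (w n - w m))\<^sup>2)"
      using AA_val[OF dw dw d] by (simp add: cinner_self)
    hence "cmod (snd (rform (AA T c)) (u n - u m) (u n - u m)) = \<bar>c * (norm (u n - u m))\<^sup>2 + (norm (w n - w m))\<^sup>2\<bar>"
      by (simp only: norm_of_real)
    moreover have "c * (norm (u n - u m))\<^sup>2 + (norm (w n - w m))\<^sup>2 \<le> \<bar>c * (norm (u n - u m))\<^sup>2 + (norm (w n - w m))\<^sup>2\<bar>"
      by (rule abs_ge_self)
    moreover have "- (c * (norm (u n - u m))\<^sup>2) \<le> \<bar>c * (norm (u n - u m))\<^sup>2\<bar>"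
      by (rule abs_ge_minus_self)
    moreover have "\<bar>c * (norm (u n - u m))\<^sup>2\<bar> = \<bar>c\<bar> * (norm (u n - u m))\<^sup>2"
      by (simp add: abs_mult)
    ultimately show ?thesis by linarith
  qed
  have "Cauchy w"
  proof (rule CauchyI)
    fix e :: real assume e: "e > 0"
    hence e2: "e\<^sup>2 / 2 > 0" by simp
    obtain N1 where N1: "\<forall>m\<ge>N1. \<forall>n\<ge>N1. cmod (snd (rform (AA T c)) (u n - u m) (u n - u m)) < e\<^sup>2 / 2"
      using cau[OF e2] by blast
    obtain \<delta> where d: "\<delta> > 0" "\<forall>r. 0 \<le> r \<longrightarrow> r < \<delta> \<longrightarrow> \<bar>c\<bar> * r\<^sup>2 < e\<^sup>2 / 2"
      using small_sq[OF e2] by blast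
    obtain N2 where N2: "\<forall>m\<ge>N2. \<forall>n\<ge>N2. norm (u m - u n) < \<delta>"
      using CauchyD[OF LIMSEQ_imp_Cauchy[OF ux] d(1)] by blast
    have "norm (w m - w n) < e" if "m \<ge> max N1 N2" "n \<ge> max N1 N2" for m n
    proof -
      have m1: "m \<ge> N1" "n \<ge> N1" "m \<ge> N2" "n \<ge> N2" using that by auto
      have "cmod (snd (rform (AA T c)) (u m - u n) (u m - u n)) < e\<^sup>2 / 2" using N1 m1 by blast
      moreover have "norm (u m - u n) < \<delta>" using N2 m1 by blast
      hence "\<bar>c\<bar> * (norm (u m - u n))\<^sup>2 < e\<^sup>2 / 2" using d(2) by simp
      ultimately have "(norm (w m - w n))\<^sup>2 < e\<^sup>2" using val[of m n] by linarith
      thus ?thesis using e power2_less_imp_less[of "norm (w m - w n)" e] by simp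
    qed
    thus "\<exists>M. \<forall>m\<ge>M. \<forall>n\<ge>M. norm (w m - w n) < e" by blast
  qed
  then obtain a where wa: "w \<longlonglongrightarrow> a" using Cauchy_convergent_iff convergent_def by blast
  have "(\<lambda>n. (u n, w n)) \<longlonglongrightarrow> (x, a)" using ux wa by (rule tendsto_Pair)
  hence "(x, a) \<in> T" by (rule closed_sequentially[OF cl w])
  thus ?thesis using wa by blast
qed

lemma cf_dom: "fst (closed_form (AA T c)) \<subseteq> rdom T"
proof
  fix x assume "x \<in> fst (closed_form (AA T c))"
  then obtain u where ap: "form_approx (rform (AA T c)) u x" unfolding closed_form_fst by blast
  have "u n \<in> rdom T" for n using ap AA_dom unfolding form_approx_iff by auto
  hence "\<forall>n. \<exists>g. (u n, g) \<in> T" unfolding rdom_def by blast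
  then obtain w where "\<And>n. (u n, w n) \<in> T" by metis
  thus "x \<in> rdom T" using approx_graph[OF ap] unfolding rdom_def by blast
qed

lemma cf_val:
  assumes x: "x \<in> fst (closed_form (AA T c))" and y: "y \<in> fst (closed_form (AA T c))"
    and a: "(x, a) \<in> T" and b: "(y, b) \<in> T"
  shows "snd (closed_form (AA T c)) x y = complex_of_real c * cinner x y + cinner a b"
proof -
  define u where "u = (SOME u. form_approx (rform (AA T c)) u x)"
  define v where "v = (SOME u. form_approx (rform (AA T c)) u y)"
  have apu: "form_approx (rform (AA T c)) u x" using x unfolding closed_form_fst u_def by (metis (mono_tags, lifting) mem_Collect_eq someI)
  have apv: "form_approx (rform (AA T c)) v y" using y unfolding closed_form_fst v_def by (metis (mono_tags, lifting) mem_Collect_eq someI)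
  have "u n \<in> rdom T" for n using apu AA_dom unfolding form_approx_iff by auto
  hence "\<forall>n. \<exists>g. (u n, g) \<in> T" unfolding rdom_def by blast
  then obtain w where w: "\<And>n. (u n, w n) \<in> T" by metis
  have "v n \<in> rdom T" for n using apv AA_dom unfolding form_approx_iff by auto
  hence "\<forall>n. \<exists>g. (v n, g) \<in> T" unfolding rdom_def by blast
  then obtain z where z: "\<And>n. (v n, z n) \<in> T" by metis
  obtain a' where a': "(x, a') \<in> T" "w \<longlonglongrightarrow> a'" using approx_graph[OF apu w] by blast
  obtain b' where b': "(y, b') \<in> T" "z \<longlonglongrightarrow> b'" using approx_graph[OF apv z] by blast
  have "a' = a" using operator_fun[OF op a'(1) a] .
  have "b' = b" using operator_fun[OF op b'(1) b] .
  have uA: "\<And>n. u n \<in> rdom (AA T c)" and ux: "u \<longlonglongrightarrow> x" using apu unfolding form_approx_iff by auto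
  have vy: "v \<longlonglongrightarrow> y" using apv unfolding form_approx_iff by auto
  have eq: "snd (rform (AA T c)) (u n) (v n) = complex_of_real c * cinner (u n) (v n) + cinner (w n) (z n)" for n
    using AA_val[OF w z uA] .
  have "(\<lambda>n. complex_of_real c * cinner (u n) (v n) + cinner (w n) (z n))
        \<longlonglongrightarrow> complex_of_real c * cinner x y + cinner a b"
    using \<open>a' = a\<close> \<open>b' = b\<close> a'(2) b'(2) ux vy by (intro tendsto_intros tendsto_cinner) auto
  hence "(\<lambda>n. snd (rform (AA T c)) (u n) (v n)) \<longlonglongrightarrow> complex_of_real c * cinner x y + cinner a b"
    unfolding eq .
  thus ?thesis unfolding closed_form_snd u_def[symmetric] v_def[symmetric] by (rule limI)
qed

lemma cf_core: "rdom T \<subseteq> fst (closed_form (AA T c))"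
proof
  fix x assume "x \<in> rdom T"
  then obtain a where xa: "(x, a) \<in> T" unfolding rdom_def by blast
  define G0 where "G0 = {p. p \<in> T \<and> fst p \<in> rdom (AA T c)}"
  have G0sub: "csubspace G0" unfolding G0_def csubspace_def
    using lin_zero[OF lin] rdom_zero[OF AA_lin] lin_add[OF lin] rdom_add[OF AA_lin]
      lin_scale[OF lin] rdom_scale[OF AA_lin]
    by (auto simp: zero_prod_def plus_prod_def scaleC_prod_def)
  define MM where "MM = closure G0"
  have MMsub: "csubspace MM" unfolding MM_def by (rule closure_csubspace[OF G0sub])
  have MMcl: "closed MM" unfolding MM_def by simp
  have MMT: "MM \<subseteq> T" unfolding MM_def G0_def by (rule closure_minimal[OF _ cl]) auto
  obtain P where PM: "P \<in> MM" and orth: "\<forall>m\<in>MM. cinner ((x, a) - P) m = 0"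
    using proj_exists[OF MMsub MMcl] by blast
  obtain d1 d2 where d: "(x, a) - P = (d1, d2)" by fastforce
  have dT: "(d1, d2) \<in> T"
  proof -
    obtain p1 p2 where P: "P = (p1, p2)" by fastforce
    have "(x - p1, a - p2) \<in> T" using lin_diff[OF lin xa] PM MMT P by blast
    thus ?thesis using d P by simp
  qed
  have perp: "cinner d1 h = 0" for h
  proof -
    obtain f p where fp: "(f, p) \<in> rprod (adj T) T" and h: "h = f + p"
      using vN_surj[OF lin cl] by blast
    then obtain g where fg: "(f, g) \<in> T" and gp: "(g, p) \<in> adj T" unfolding rprod_iff by blast
    have "(f, p + scaleC (complex_of_real c) f) \<in> (AA T c)" unfolding AA_def rshift_iff using fp by simp
    hence "f \<in> rdom (AA T c)" by (rule rdomI)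
    hence "(f, g) \<in> MM" unfolding MM_def G0_def using fg closure_subset by fastforce
    hence "cinner (d1, d2) (f, g) = 0" using orth d by metis
    hence "cinner d1 f + cinner d2 g = 0" by (simp add: cinner_Pair)
    moreover have "cinner d2 g = cinner d1 p" using gp dT adj_iff by blast
    ultimately have "cinner d1 f + cinner d1 p = 0" by simp
    thus ?thesis unfolding h cinner_add_right .
  qed
  have "d1 = 0" using perp[of d1] by simp
  hence "d2 \<in> rmul T" using dT unfolding rmul_def by simp
  hence "d2 = 0" using op unfolding is_operator_def by simp
  hence "(x, a) = P" using d \<open>d1 = 0\<close> by (simp add: zero_prod_def[symmetric])
  hence "(x, a) \<in> closure G0" using PM unfolding MM_def by simp
  then obtain s where s: "\<forall>n. s n \<in> G0" "s \<longlonglongrightarrow> (x, a)" unfolding closure_sequential by blast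
  define u where "u = (\<lambda>n. fst (s n))"
  define w where "w = (\<lambda>n. snd (s n))"
  have uw: "(u n, w n) \<in> T" "u n \<in> rdom (AA T c)" for n using s(1) unfolding G0_def u_def w_def by auto
  have ux: "u \<longlonglongrightarrow> x" unfolding u_def using tendsto_fst[OF s(2)] by simp
  have wa: "w \<longlonglongrightarrow> a" unfolding w_def using tendsto_snd[OF s(2)] by simp
  have "form_approx (rform (AA T c)) u x" unfolding form_approx_iff
  proof (intro conjI allI impI)
    show "u n \<in> fst (rform (AA T c))" for n using uw by simp
    show "u \<longlonglongrightarrow> x" by (rule ux)
  next
    fix e :: real assume e: "e > 0"
    hence e2: "e / 2 > 0" by simp
    obtain \<delta>1 where d1: "\<delta>1 > 0" "\<forall>r. 0 \<le> r \<longrightarrow> r < \<delta>1 \<longrightarrow> \<bar>c\<bar> * r\<^sup>2 < e / 2"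
      using small_sq[OF e2] by blast
    obtain \<delta>2 where d2: "\<delta>2 > 0" "\<forall>r. 0 \<le> r \<longrightarrow> r < \<delta>2 \<longrightarrow> \<bar>1::real\<bar> * r\<^sup>2 < e / 2"
      using small_sq[OF e2] by blast
    obtain N1 where N1: "\<forall>m\<ge>N1. \<forall>n\<ge>N1. norm (u m - u n) < \<delta>1"
      using CauchyD[OF LIMSEQ_imp_Cauchy[OF ux] d1(1)] by blast
    obtain N2 where N2: "\<forall>m\<ge>N2. \<forall>n\<ge>N2. norm (w m - w n) < \<delta>2"
      using CauchyD[OF LIMSEQ_imp_Cauchy[OF wa] d2(1)] by blast
    have "cmod (snd (rform (AA T c)) (u n - u m) (u n - u m)) < e" if "m \<ge> max N1 N2" "n \<ge> max N1 N2" for m n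
    proof -
      have m1: "m \<ge> N1" "n \<ge> N1" "m \<ge> N2" "n \<ge> N2" using that by auto
      have dd: "u n - u m \<in> rdom (AA T c)" using rdom_diff[OF AA_lin uw(2) uw(2)] .
      have dw: "(u n - u m, w n - w m) \<in> T" using lin_diff[OF lin uw(1) uw(1)] .
      have "snd (rform (AA T c)) (u n - u m) (u n - u m) = complex_of_real (c * (norm (u n - u m))\<^sup>2 + (norm (w n - w m))\<^sup>2)"
        using AA_val[OF dw dw dd] by (simp add: cinner_self)
      hence "cmod (snd (rform (AA T c)) (u n - u m) (u n - u m)) = \<bar>c * (norm (u n - u m))\<^sup>2 + (norm (w n - w m))\<^sup>2\<bar>"
        by (simp only: norm_of_real)
      also have "\<dots> \<le> \<bar>c * (norm (u n - u m))\<^sup>2\<bar> + \<bar>(norm (w n - w m))\<^sup>2\<bar>"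
        by (rule abs_triangle_ineq)
      also have "\<dots> = \<bar>c\<bar> * (norm (u n - u m))\<^sup>2 + (norm (w n - w m))\<^sup>2"
        by (simp add: abs_mult)
      also have "\<bar>c\<bar> * (norm (u n - u m))\<^sup>2 < e / 2" using N1 m1 d1(2) by simp
      moreover have "(norm (w n - w m))\<^sup>2 < e / 2" using N2 m1 d2(2) by simp
      ultimately show ?thesis by linarith
    qed
    thus "\<exists>N. \<forall>m\<ge>N. \<forall>n\<ge>N. cmod (snd (rform (AA T c)) (u n - u m) (u n - u m)) < e" by blast
  qed
  thus "x \<in> fst (closed_form (AA T c))" unfolding closed_form_fst by blast
qed

end

lemma quad_cs:
  fixes \<alpha> \<gamma> :: real and \<beta> :: complex
  assumes H: "\<And>l. 0 \<le> \<alpha> + 2 * Re (cnj l * \<beta>) + (cmod l)\<^sup>2 * \<gamma>" and g: "\<gamma> \<ge> 0"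
  shows "(cmod \<beta>)\<^sup>2 \<le> \<alpha> * \<gamma>"
proof (cases "\<gamma> > 0")
  case True
  define l where "l = - \<beta> / complex_of_real \<gamma>"
  have bb: "cnj \<beta> * \<beta> = complex_of_real ((cmod \<beta>)\<^sup>2)" using complex_norm_square[of \<beta>] by (simp add: mult.commute)
  have "cnj l * \<beta> = - complex_of_real ((cmod \<beta>)\<^sup>2 / \<gamma>)"
    unfolding l_def using bb by (simp add: field_simps)
  hence r1: "Re (cnj l * \<beta>) = - (cmod \<beta>)\<^sup>2 / \<gamma>" by simp
  have r2: "(cmod l)\<^sup>2 * \<gamma> = (cmod \<beta>)\<^sup>2 / \<gamma>"
    unfolding l_def using True by (simp add: norm_divide power_divide power2_eq_square)
  have "0 \<le> \<alpha> - (cmod \<beta>)\<^sup>2 / \<gamma>" using H[of l] unfolding r1 r2 by simp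
  thus ?thesis using True by (simp add: field_simps)
next
  case False
  hence g0: "\<gamma> = 0" using g by simp
  have a0: "\<alpha> \<ge> 0" using H[of 0] by simp
  show ?thesis
  proof (cases "\<beta> = 0")
    case True thus ?thesis using g0 by simp
  next
    case False
    define r where "r = (\<alpha> + 1) / (cmod \<beta>)\<^sup>2"
    have bb: "cnj \<beta> * \<beta> = complex_of_real ((cmod \<beta>)\<^sup>2)" using complex_norm_square[of \<beta>] by (simp add: mult.commute)
    have "cnj (- complex_of_real r * \<beta>) * \<beta> = - complex_of_real (r * (cmod \<beta>)\<^sup>2)"
      using bb by (simp add: mult.assoc)
    hence "Re (cnj (- complex_of_real r * \<beta>) * \<beta>) = - (\<alpha> + 1)"
      unfolding r_def using False by simp
    thus ?thesis using H[of "- complex_of_real r * \<beta>"] g0 a0 by simp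
  qed
qed

section \<open>The closed form of a semibounded selfadjoint relation on its domain\<close>

context
  fixes H :: "('a::chilbert \<times> 'a) set" and c :: real
  assumes sa: "selfadjoint H" and bb: "bounded_below_by H c"
begin

lemma H_lin: "linear_relation H" using sa adj_linear unfolding selfadjoint_def by metis

lemma H_adj: "(b, b') \<in> H \<Longrightarrow> (a, a') \<in> H \<Longrightarrow> cinner a' b = cinner a b'"
proof -
  assume b: "(b, b') \<in> H" and a: "(a, a') \<in> H"
  have "(b, b') \<in> adj H" using b sa unfolding selfadjoint_def by simp
  thus ?thesis using a adj_iff by blast
qed

lemma H_perp: "(0, m) \<in> H \<Longrightarrow> b \<in> rdom H \<Longrightarrow> cinner m b = 0"
proof -
  assume m: "(0, m) \<in> H" and "b \<in> rdom H"
  then obtain b' where b: "(b, b') \<in> H" unfolding rdom_def by blast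
  show ?thesis using H_adj[OF b m] by simp
qed

lemma H_tv: "(a, a') \<in> H \<Longrightarrow> b \<in> rdom H \<Longrightarrow> snd (rform H) a b = cinner a' b"
proof -
  assume a: "(a, a') \<in> H" and b: "b \<in> rdom H"
  define p where "p = (SOME a'. (a, a') \<in> H)"
  have p: "(a, p) \<in> H" using rform_some[OF rdomI[OF a]] p_def by simp
  have "(a - a, p - a') \<in> H" using lin_diff[OF H_lin p a] .
  hence "cinner (p - a') b = 0" using H_perp b by simp
  hence "cinner p b = cinner a' b" unfolding cinner_diff_left by simp
  thus ?thesis unfolding rform_snd p_def .
qed

lemma dom_approx: "a \<in> rdom H \<Longrightarrow> form_approx (rform H) (\<lambda>n. a) a"
proof -
  assume a: "a \<in> rdom H"
  have "snd (rform H) 0 0 = 0" unfolding rform_snd by simp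
  thus ?thesis unfolding form_approx_iff using a by simp
qed

definition "sf a a' b = cinner (a' - scaleC (complex_of_real c) a) b"

lemma sf_herm: "(a, a') \<in> H \<Longrightarrow> (b, b') \<in> H \<Longrightarrow> sf b b' a = cnj (sf a a' b)"
proof -
  assume a: "(a, a') \<in> H" and b: "(b, b') \<in> H"
  have "cinner b' a = cinner b a'" using H_adj[OF a b] .
  thus ?thesis unfolding sf_def cinner_diff_left cinner_scaleC_left
    by (simp add: cinner_commute[of a' b] cinner_commute[of a b])
qed

lemma sf_real: "(a, a') \<in> H \<Longrightarrow> sf a a' a = complex_of_real (Re (sf a a' a)) \<and> Re (sf a a' a) \<ge> 0"
proof -
  assume a: "(a, a') \<in> H"
  have i: "Im (cinner a' a) = 0" and r: "Re (cinner a' a) \<ge> c * (norm a)\<^sup>2"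
    using bb a unfolding bounded_below_by_def by auto
  have "sf a a' a = cinner a' a - complex_of_real (c * (norm a)\<^sup>2)"
    unfolding sf_def cinner_diff_left cinner_scaleC_left cinner_self by simp
  thus ?thesis using i r by (simp add: complex_eq_iff)
qed

lemma sf_add_left: "sf (a + b) (a' + b') z = sf a a' z + sf b b' z"
  unfolding sf_def scaleC_add_right
  by (simp add: cinner_add_left cinner_diff_left algebra_simps)
lemma sf_scale_left: "sf (scaleC l b) (scaleC l b') z = l * sf b b' z"
proof -
  have "scaleC l b' - scaleC (complex_of_real c) (scaleC l b) = scaleC l (b' - scaleC (complex_of_real c) b)"
    unfolding scaleC_diff_right scaleC_scaleC by (simp add: mult.commute)
  thus ?thesis unfolding sf_def by (simp add: cinner_scaleC_left)
qed
lemma sf_add_right: "sf a a' (y + z) = sf a a' y + sf a a' z"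
  unfolding sf_def by (rule cinner_add_right)
lemma sf_scale_right: "sf a a' (scaleC l z) = cnj l * sf a a' z"
  unfolding sf_def by (rule cinner_scaleC_right)

lemma sf_cs:
  assumes a: "(a, a') \<in> H" and b: "(b, b') \<in> H"
  shows "(cmod (sf a a' b))\<^sup>2 \<le> Re (sf a a' a) * Re (sf b b' b)"
proof (rule quad_cs)
  show "Re (sf b b' b) \<ge> 0" using sf_real[OF b] by blast
  fix l
  have z: "(a + scaleC l b, a' + scaleC l b') \<in> H" using lin_add[OF H_lin a lin_scale[OF H_lin b]] .
  have "sf (a + scaleC l b) (a' + scaleC l b') (a + scaleC l b)
      = sf a a' a + cnj l * sf a a' b + l * sf b b' a + l * cnj l * sf b b' b"
    unfolding sf_add_left sf_scale_left sf_add_right sf_scale_right by (simp add: algebra_simps)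
  also have "sf b b' a = cnj (sf a a' b)" using sf_herm[OF a b] .
  also have "sf b b' b = complex_of_real (Re (sf b b' b))" using sf_real[OF b] by blast
  also have "l * cnj l = complex_of_real ((cmod l)\<^sup>2)" using complex_norm_square[of l] by simp
  finally have e: "Re (sf (a + scaleC l b) (a' + scaleC l b') (a + scaleC l b))
      = Re (sf a a' a) + 2 * Re (cnj l * sf a a' b) + (cmod l)\<^sup>2 * Re (sf b b' b)"
  proof -
    assume "sf (a + scaleC l b) (a' + scaleC l b') (a + scaleC l b) =
      sf a a' a + cnj l * sf a a' b + l * cnj (sf a a' b) +
      complex_of_real ((cmod l)\<^sup>2) * complex_of_real (Re (sf b b' b))"
    moreover have "Re (l * cnj (sf a a' b)) = Re (cnj l * sf a a' b)"
      by (metis complex_cnj_cnj complex_cnj_mult cnj.simps(1))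
    ultimately show ?thesis by simp
  qed
  show "0 \<le> Re (sf a a' a) + 2 * Re (cnj l * sf a a' b) + (cmod l)\<^sup>2 * Re (sf b b' b)"
    using sf_real[OF z] e by linarith
qed

lemma approx_sf_zero:
  assumes ap: "form_approx (rform H) u f" and fg: "(f, g) \<in> H" and U: "\<And>n. (u n, U n) \<in> H"
  shows "(\<lambda>n. Re (sf (u n - f) (U n - g) (u n - f))) \<longlonglongrightarrow> 0"
proof -
  have ux: "u \<longlonglongrightarrow> f" and cau: "\<And>e. e > 0 \<Longrightarrow> \<exists>N. \<forall>m\<ge>N. \<forall>n\<ge>N. cmod (snd (rform H) (u n - u m) (u n - u m)) < e"
    using ap unfolding form_approx_iff by auto
  define q where "q = (\<lambda>n. Re (sf (u n - f) (U n - g) (u n - f)))"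
  have dH: "(u n - f, U n - g) \<in> H" for n using lin_diff[OF H_lin U fg] .
  have q0: "q n \<ge> 0" for n unfolding q_def using sf_real[OF dH] by blast
  have small: "\<exists>N. \<forall>n\<ge>N. q n \<le> \<epsilon>" if eps: "\<epsilon> > 0" for \<epsilon>
  proof -
    have e2: "\<epsilon> / 2 > 0" using eps by simp
    obtain N1 where N1: "\<forall>m\<ge>N1. \<forall>n\<ge>N1. cmod (snd (rform H) (u n - u m) (u n - u m)) < \<epsilon> / 2"
      using cau[OF e2] by blast
    obtain \<delta> where d: "\<delta> > 0" "\<forall>r. 0 \<le> r \<longrightarrow> r < \<delta> \<longrightarrow> \<bar>c\<bar> * r\<^sup>2 < \<epsilon> / 2"
      using small_sq[OF e2] by blast
    obtain N2 where N2: "\<forall>m\<ge>N2. \<forall>n\<ge>N2. norm (u m - u n) < \<delta>"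
      using CauchyD[OF LIMSEQ_imp_Cauchy[OF ux] d(1)] by blast
    have wsmall: "Re (sf (u n - u m) (U n - U m) (u n - u m)) < \<epsilon>"
      if "m \<ge> max N1 N2" "n \<ge> max N1 N2" for m n
    proof -
      have m1: "m \<ge> N1" "n \<ge> N1" "m \<ge> N2" "n \<ge> N2" using that by auto
      have wH: "(u n - u m, U n - U m) \<in> H" using lin_diff[OF H_lin U U] .
      have "snd (rform H) (u n - u m) (u n - u m) = cinner (U n - U m) (u n - u m)"
        using H_tv[OF wH rdomI[OF wH]] .
      hence "sf (u n - u m) (U n - U m) (u n - u m) =
          snd (rform H) (u n - u m) (u n - u m) - complex_of_real (c * (norm (u n - u m))\<^sup>2)"
        unfolding sf_def cinner_diff_left cinner_scaleC_left cinner_self by simp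
      hence "Re (sf (u n - u m) (U n - U m) (u n - u m)) =
          Re (snd (rform H) (u n - u m) (u n - u m)) - c * (norm (u n - u m))\<^sup>2" by simp
      moreover have "Re (snd (rform H) (u n - u m) (u n - u m)) \<le> cmod (snd (rform H) (u n - u m) (u n - u m))"
        by (rule complex_Re_le_cmod)
      moreover have "cmod (snd (rform H) (u n - u m) (u n - u m)) < \<epsilon> / 2" using N1 m1 by blast
      moreover have "norm (u n - u m) < \<delta>" using N2 m1 by blast
      hence "\<bar>c\<bar> * (norm (u n - u m))\<^sup>2 < \<epsilon> / 2" using d(2) by simp
      moreover have "- (c * (norm (u n - u m))\<^sup>2) \<le> \<bar>c * (norm (u n - u m))\<^sup>2\<bar>"
        by (rule abs_ge_minus_self)
      moreover have "\<bar>c * (norm (u n - u m))\<^sup>2\<bar> = \<bar>c\<bar> * (norm (u n - u m))\<^sup>2"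
        by (simp add: abs_mult)
      ultimately show ?thesis by linarith
    qed
    have "q n \<le> \<epsilon>" if n: "n \<ge> max N1 N2" for n
    proof -
      define \<beta> where "\<beta> = (\<lambda>m. sf (u n - u m) (U n - U m) (u n - f))"
      have cs: "(cmod (\<beta> m))\<^sup>2 \<le> \<epsilon> * q n" if m: "m \<ge> max N1 N2" for m
      proof -
        have wH: "(u n - u m, U n - U m) \<in> H" using lin_diff[OF H_lin U U] .
        have "(cmod (\<beta> m))\<^sup>2 \<le> Re (sf (u n - u m) (U n - U m) (u n - u m)) * q n"
          unfolding \<beta>_def q_def by (rule sf_cs[OF wH dH])
        also have "\<dots> \<le> \<epsilon> * q n" using wsmall[OF m n] q0[of n] by (intro mult_right_mono) auto
        finally show ?thesis .
      qed
      have beq: "\<beta> = (\<lambda>m. cnj (sf (u n - f) (U n - g) (u n - u m)))"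
        unfolding \<beta>_def using sf_herm[OF dH lin_diff[OF H_lin U U]] by (intro ext)
      have "(\<lambda>m. sf (u n - f) (U n - g) (u n - u m)) \<longlonglongrightarrow> sf (u n - f) (U n - g) (u n - f)"
        unfolding sf_def by (intro tendsto_cinner tendsto_intros ux)
      hence "\<beta> \<longlonglongrightarrow> cnj (sf (u n - f) (U n - g) (u n - f))"
        unfolding beq by (rule tendsto_cnj)
      also have "cnj (sf (u n - f) (U n - g) (u n - f)) = complex_of_real (q n)"
      proof -
        have "sf (u n - f) (U n - g) (u n - f) = complex_of_real (q n)"
          unfolding q_def using sf_real[OF dH] by blast
        thus ?thesis by simp
      qed
      finally have "(\<lambda>m. (cmod (\<beta> m))\<^sup>2) \<longlonglongrightarrow> (cmod (complex_of_real (q n)))\<^sup>2"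
        by (intro tendsto_intros)
      moreover have "\<exists>N. \<forall>m\<ge>N. (cmod (\<beta> m))\<^sup>2 \<le> \<epsilon> * q n" using cs by blast
      ultimately have "(cmod (complex_of_real (q n)))\<^sup>2 \<le> \<epsilon> * q n"
        by (rule LIMSEQ_le_const2)
      hence "(q n)\<^sup>2 \<le> \<epsilon> * q n" by simp
      hence qq: "q n * q n \<le> \<epsilon> * q n" by (simp add: power2_eq_square)
      show ?thesis
      proof (cases "q n = 0")
        case True thus ?thesis using eps by simp
      next
        case False hence "q n > 0" using q0[of n] by simp
        thus ?thesis using qq mult_right_le_imp_le by blast
      qed
    qed
    thus ?thesis by blast
  qed
  show ?thesis unfolding q_def[symmetric]
  proof (rule LIMSEQ_I)
    fix r :: real assume r: "r > 0"
    obtain N where N: "\<forall>n\<ge>N. q n \<le> r / 2" using small[of "r / 2"] r by auto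
    have "norm (q n - 0) < r" if "n \<ge> N" for n using N that q0[of n] r by auto
    thus "\<exists>no. \<forall>n\<ge>no. norm (q n - 0) < r" by blast
  qed
qed

lemma H_cf_val:
  assumes fg: "(f, g) \<in> H" and x: "x \<in> rdom H"
  shows "snd (closed_form H) f x = cinner g x"
proof -
  obtain x' where xx: "(x, x') \<in> H" using x unfolding rdom_def by blast
  define u where "u = (SOME u. form_approx (rform H) u f)"
  define v where "v = (SOME u. form_approx (rform H) u x)"
  have apu: "form_approx (rform H) u f" unfolding u_def
    by (rule someI[of "\<lambda>u. form_approx (rform H) u f", OF dom_approx[OF rdomI[OF fg]]])
  have apv: "form_approx (rform H) v x" unfolding v_def
    by (rule someI[of "\<lambda>u. form_approx (rform H) u x", OF dom_approx[OF x]])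
  have uH: "u n \<in> rdom H" and vH: "v n \<in> rdom H" for n
    using apu apv unfolding form_approx_iff by auto
  define U where "U = (\<lambda>n. SOME a'. (u n, a') \<in> H)"
  define V where "V = (\<lambda>n. SOME a'. (v n, a') \<in> H)"
  have U: "(u n, U n) \<in> H" for n unfolding U_def using rform_some[OF uH] .
  have V: "(v n, V n) \<in> H" for n unfolding V_def using rform_some[OF vH] .
  have ux: "u \<longlonglongrightarrow> f" and vx: "v \<longlonglongrightarrow> x" using apu apv unfolding form_approx_iff by auto
  have q1: "(\<lambda>n. Re (sf (u n - f) (U n - g) (u n - f))) \<longlonglongrightarrow> 0" by (rule approx_sf_zero[OF apu fg U])
  have q2: "(\<lambda>n. Re (sf (v n - x) (V n - x') (v n - x))) \<longlonglongrightarrow> 0" by (rule approx_sf_zero[OF apv xx V])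
  have dH: "(u n - f, U n - g) \<in> H" for n using lin_diff[OF H_lin U fg] .
  have eH: "(v n - x, V n - x') \<in> H" for n using lin_diff[OF H_lin V xx] .
  have dec: "snd (rform H) (u n) (v n) = cinner g x + cinner g (v n - x) + cinner (u n - f) x'
      + sf (u n - f) (U n - g) (v n - x) + complex_of_real c * cinner (u n - f) (v n - x)" for n
  proof -
    have "snd (rform H) (u n) (v n) = cinner (U n) (v n)" using H_tv[OF U vH] .
    also have "cinner (U n - g) x = cinner (u n - f) x'" using H_adj[OF xx dH] .
    hence "cinner (U n) (v n) = cinner g x + cinner g (v n - x) + cinner (u n - f) x'
      + sf (u n - f) (U n - g) (v n - x) + complex_of_real c * cinner (u n - f) (v n - x)"
      unfolding sf_def cinner_diff_left cinner_diff_right cinner_scaleC_left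
      by (simp add: algebra_simps)
    finally show ?thesis .
  qed
  have b: "(\<lambda>n. sf (u n - f) (U n - g) (v n - x)) \<longlonglongrightarrow> 0"
  proof (rule Lim_null_comparison)
    show "\<forall>\<^sub>F n in sequentially. norm (sf (u n - f) (U n - g) (v n - x))
        \<le> sqrt (Re (sf (u n - f) (U n - g) (u n - f)) * Re (sf (v n - x) (V n - x') (v n - x)))"
      using sf_cs[OF dH eH] by (intro always_eventually allI real_le_rsqrt) auto
    show "(\<lambda>n. sqrt (Re (sf (u n - f) (U n - g) (u n - f)) * Re (sf (v n - x) (V n - x') (v n - x)))) \<longlonglongrightarrow> 0"
      using tendsto_real_sqrt[OF tendsto_mult[OF q1 q2]] by simp
  qed
  have "(\<lambda>n. cinner g x + cinner g (v n - x) + cinner (u n - f) x'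
      + sf (u n - f) (U n - g) (v n - x) + complex_of_real c * cinner (u n - f) (v n - x))
      \<longlonglongrightarrow> cinner g x + cinner g (x - x) + cinner (f - f) x' + 0 + complex_of_real c * cinner (f - f) (x - x)"
    by (intro tendsto_intros tendsto_cinner ux vx b)
  hence "(\<lambda>n. snd (rform H) (u n) (v n)) \<longlonglongrightarrow> cinner g x" unfolding dec by simp
  thus ?thesis unfolding closed_form_snd u_def[symmetric] v_def[symmetric] by (rule limI)
qed

end


lemma AA_eq: "AA T c = rshift c (rprod (adj T) T)" by (simp add: AA_def)

lemma op_closed_lin: "is_operator T \<Longrightarrow> linear_relation T" unfolding is_operator_def by blast

lemma closed_op_sub:
  assumes K: "is_operator K" "closed K" and RK: "R \<subseteq> K"
  shows "is_operator (adj (adj R))" "adj (adj R) \<subseteq> K"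
proof -
  show sub: "adj (adj R) \<subseteq> K"
    using adj_antimono[OF adj_antimono[OF RK]] adj_adj_closed[OF op_closed_lin[OF K(1)] K(2)] by simp
  have "rmul (adj (adj R)) \<subseteq> rmul K" using sub unfolding rmul_def by blast
  moreover have "0 \<in> rmul (adj (adj R))" using lin_zero[OF adj_linear] unfolding rmul_def by blast
  ultimately show "is_operator (adj (adj R))" using K(1) adj_linear unfolding is_operator_def by blast
qed

lemma form_incl_AA:
  assumes T1: "linear_relation T1" "closed T1" "is_operator T1"
    and T2: "linear_relation T2" "closed T2" "is_operator T2" and sub: "T1 \<subseteq> T2"
  shows "form_incl (closed_form (AA T1 c)) (closed_form (AA T2 c))"
proof -
  have fs: "fst (closed_form (AA T1 c)) \<subseteq> fst (closed_form (AA T2 c))"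
    using cf_dom[OF T1, of c] cf_core[OF T2, of c] sub unfolding rdom_def by blast
  have "snd (closed_form (AA T2 c)) x y = snd (closed_form (AA T1 c)) x y"
    if x: "x \<in> fst (closed_form (AA T1 c))" and y: "y \<in> fst (closed_form (AA T1 c))" for x y
  proof -
    obtain a where a: "(x, a) \<in> T1" using x cf_dom[OF T1, of c] unfolding rdom_def by blast
    obtain b where b: "(y, b) \<in> T1" using y cf_dom[OF T1, of c] unfolding rdom_def by blast
    have x2: "x \<in> fst (closed_form (AA T2 c))" and y2: "y \<in> fst (closed_form (AA T2 c))"
      using fs x y by auto
    have a2: "(x, a) \<in> T2" and b2: "(y, b) \<in> T2" using a b sub by auto
    show ?thesis unfolding cf_val[OF T1 x y a b] cf_val[OF T2 x2 y2 a2 b2] ..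
  qed
  thus ?thesis unfolding form_incl_def using fs by blast
qed

lemma rep_map_val:
  assumes rm: "representing_map S c Q"
  shows "\<And>\<phi> \<phi>' \<psi> \<psi>' q p. (\<phi>, \<phi>') \<in> S \<Longrightarrow> (\<psi>, \<psi>') \<in> S \<Longrightarrow> (\<phi>, q) \<in> Q \<Longrightarrow> (\<psi>, p) \<in> Q \<Longrightarrow>
        cinner \<phi>' \<psi> = complex_of_real c * cinner \<phi> \<psi> + cinner q p"
proof -
  fix \<phi> \<phi>' \<psi> \<psi>' q p assume a: "(\<phi>, \<phi>') \<in> S" and b: "(\<psi>, \<psi>') \<in> S" and q: "(\<phi>, q) \<in> Q" and p: "(\<psi>, p) \<in> Q"
  have R3: "\<forall>(\<phi>, \<phi>')\<in>S. \<forall>(\<psi>, \<psi>')\<in>S. \<forall>q p. (\<phi>, q) \<in> Q \<longrightarrow> (\<psi>, p) \<in> Q \<longrightarrow>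
        cinner \<phi>' \<psi> = complex_of_real c * cinner \<phi> \<psi> + cinner q p"
    using rm unfolding representing_map_def by blast
  have "\<forall>(\<psi>, \<psi>')\<in>S. \<forall>q p. (\<phi>, q) \<in> Q \<longrightarrow> (\<psi>, p) \<in> Q \<longrightarrow>
        cinner \<phi>' \<psi> = complex_of_real c * cinner \<phi> \<psi> + cinner q p"
    using bspec[OF R3 a] by simp
  from bspec[OF this b] show "cinner \<phi>' \<psi> = complex_of_real c * cinner \<phi> \<psi> + cinner q p"
    using q p by simp
qed

theorem lemma7p2:
  fixes S H :: "('h::chilbert \<times> 'h) set"
    and Q :: "('h \<times> 'k::chilbert) set"
    and \<gamma> c :: real
  assumes "lower_bound S \<gamma>"
    and "c \<le> \<gamma>"
    and "representing_map S c Q"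
  shows "(selfadjoint H \<and> S \<subseteq> H \<and> bounded_below_by H c
          \<and> form_incl (closed_form (friedrichs c Q)) (closed_form H)
          \<and> form_incl (closed_form H) (closed_form (krein c (companion S c Q))))
     \<longleftrightarrow> (\<exists>R :: ('h \<times> 'k) set. is_operator R
          \<and> Q \<subseteq> R \<and> R \<subseteq> rreg (adj (companion S c Q))
          \<and> H = rshift c (rprod (adj R) (adj (adj R))))"
proof -
  define J where "J = companion S c Q"
  define T where "T = adj J"
  define K where "K = rreg T"
  have rm: "representing_map S c Q" by fact
  have Qop: "is_operator Q" and domQ: "rdom Q = rdom S"
    using rm unfolding representing_map_def by blast+
  note rep = rep_map_val[OF rm]
  have Tlin: "linear_relation T" and Tcl: "closed T" unfolding T_def by (rule adj_linear, rule adj_closed)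
  have Kop: "is_operator K" and Kcl: "closed K" and Klin: "linear_relation K"
    unfolding K_def using rreg_operator[OF Tlin Tcl] rreg_closed[OF Tlin Tcl]
    by (auto simp: is_operator_def)
  have Kchar: "K = {(f, g). (f, g) \<in> T \<and> (\<forall>m\<in>rmul T. cinner g m = 0)}"
    unfolding K_def by (rule rreg_char[OF Tlin Tcl])
  have KT: "K \<subseteq> T" using Kchar by auto
  have krein_eq: "krein c J = AA K c"
    unfolding krein_def AA_eq K_def T_def[symmetric] rprod_rreg[OF Tlin Tcl] ..
  have QK: "Q \<subseteq> K"
  proof
    fix z assume z: "z \<in> Q"
    obtain \<phi> q where zq: "z = (\<phi>, q)" by fastforce
    have "\<phi> \<in> rdom S" using rdomI[of \<phi> q Q] z zq domQ by simp
    then obtain \<phi>' where \<phi>': "(\<phi>, \<phi>') \<in> S" unfolding rdom_def by blast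
    have inT: "(\<phi>, q) \<in> T" unfolding T_def adj_iff
    proof (intro allI impI)
      fix a b assume "(a, b) \<in> J"
      then obtain \<psi> \<psi>' where ab: "(\<psi>, \<psi>') \<in> S" "(\<psi>, a) \<in> Q" "b = \<psi>' - scaleC (complex_of_real c) \<psi>"
        unfolding J_def companion_def by blast
      have "cinner \<psi>' \<phi> = complex_of_real c * cinner \<psi> \<phi> + cinner a q"
        using rep[OF ab(1) \<phi>' ab(2)] z zq by blast
      thus "cinner b \<phi> = cinner a q" unfolding ab(3) cinner_diff_left cinner_scaleC_left by simp
    qed
    have "(q, \<phi>' - scaleC (complex_of_real c) \<phi>) \<in> J"
      unfolding J_def companion_def using \<phi>' z zq by blast
    hence "cinner q m = 0" if "m \<in> rmul T" for m
      using adj_mul_perp[of m J] that unfolding rmul_def T_def by blast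
    thus "z \<in> K" unfolding Kchar using inT zq by blast
  qed
  have Ssub: "S \<subseteq> rshift c (rprod (adj R) (adj (adj R)))" if RK: "R \<subseteq> K" and QR: "Q \<subseteq> R" for R
  proof
    fix z assume z: "z \<in> S"
    obtain \<phi> \<phi>' where zz: "z = (\<phi>, \<phi>')" by fastforce
    have "\<phi> \<in> rdom Q" using rdomI[of \<phi> \<phi>' S] z zz domQ by simp
    then obtain q where q: "(\<phi>, q) \<in> Q" unfolding rdom_def by blast
    have qJ: "(q, \<phi>' - scaleC (complex_of_real c) \<phi>) \<in> J"
      unfolding J_def companion_def using z zz q by blast
    have "(q, \<phi>' - scaleC (complex_of_real c) \<phi>) \<in> adj R" unfolding adj_iff
    proof (intro allI impI)
      fix a b assume "(a, b) \<in> R"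
      hence "(a, b) \<in> T" using RK KT by blast
      hence "cinner (\<phi>' - scaleC (complex_of_real c) \<phi>) a = cinner q b"
        using qJ unfolding T_def adj_iff by blast
      thus "cinner b q = cinner a (\<phi>' - scaleC (complex_of_real c) \<phi>)" by (rule cinner_swap[symmetric])
    qed
    moreover have "(\<phi>, q) \<in> adj (adj R)" using q QR adj_adj_sup by blast
    ultimately show "z \<in> rshift c (rprod (adj R) (adj (adj R)))"
      unfolding zz rshift_iff rprod_iff by blast
  qed
  show ?thesis unfolding J_def[symmetric] T_def[symmetric] K_def[symmetric]
  proof
    assume "selfadjoint H \<and> S \<subseteq> H \<and> bounded_below_by H c
          \<and> form_incl (closed_form (friedrichs c Q)) (closed_form H)
          \<and> form_incl (closed_form H) (closed_form (krein c J))"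
    hence sa: "selfadjoint H" and SH: "S \<subseteq> H" and bbH: "bounded_below_by H c"
      and inc: "form_incl (closed_form H) (closed_form (AA K c))" unfolding krein_eq by auto
    have Hlin: "linear_relation H" by (rule H_lin[OF sa bbH])
    define R where "R = {(f, g). (f, g) \<in> K \<and> f \<in> rdom H}"
    have RK: "R \<subseteq> K" unfolding R_def by auto
    have Rop: "is_operator R"
    proof -
      have "linear_relation R" unfolding linear_relation_def R_def
        using lin_add[OF Klin] lin_scale[OF Klin] lin_zero[OF Klin]
          rdom_add[OF Hlin] rdom_scale[OF Hlin] rdom_zero[OF Hlin] by auto
      moreover have "rmul R \<subseteq> rmul K" using RK unfolding rmul_def by blast
      moreover have "0 \<in> rmul R" using lin_zero[OF Klin] rdom_zero[OF Hlin] unfolding rmul_def R_def by auto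
      ultimately show ?thesis using Kop unfolding is_operator_def by blast
    qed
    have QR: "Q \<subseteq> R"
    proof
      fix z assume z: "z \<in> Q"
      obtain \<phi> q where zq: "z = (\<phi>, q)" by fastforce
      have "\<phi> \<in> rdom S" using rdomI[of \<phi> q Q] z zq domQ by simp
      hence "\<phi> \<in> rdom H" using SH unfolding rdom_def by blast
      thus "z \<in> R" unfolding R_def using QK z zq by blast
    qed
    define T2 where "T2 = adj (adj R)"
    have T2op: "is_operator T2" and T2K: "T2 \<subseteq> K" unfolding T2_def using closed_op_sub[OF Kop Kcl RK] by auto
    have T2lin: "linear_relation T2" and T2cl: "closed T2" unfolding T2_def by (rule adj_linear, rule adj_closed)
    have adjR: "adj R = adj T2" unfolding T2_def adj3 ..
    define H' where "H' = rshift c (rprod (adj R) (adj (adj R)))"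
    have H'eq: "H' = AA T2 c" unfolding H'_def AA_eq adjR T2_def[symmetric]
      using adj_adj_closed[OF T2lin T2cl] by simp
    have saH': "selfadjoint H'" unfolding H'eq by (rule AA_sa[OF T2lin T2cl T2op])
    have domH: "rdom H \<subseteq> fst (closed_form H)"
      unfolding closed_form_fst using dom_approx[OF sa bbH] by blast
    have HH': "H \<subseteq> H'"
    proof
      fix z assume z: "z \<in> H"
      obtain f g where zz: "z = (f, g)" by fastforce
      have fH: "f \<in> rdom H" using rdomI[of f g H] z zz by simp
      have fK: "f \<in> fst (closed_form (AA K c))" using inc fH domH unfolding form_incl_def by blast
      obtain a where fa: "(f, a) \<in> K" using fK cf_dom[OF Klin Kcl Kop, of c] unfolding rdom_def by blast
      have faR: "(f, a) \<in> R" unfolding R_def using fa fH by blast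
      have "(a, g - scaleC (complex_of_real c) f) \<in> adj R" unfolding adj_iff
      proof (intro allI impI)
        fix x b assume xb: "(x, b) \<in> R"
        hence xH: "x \<in> rdom H" and xbK: "(x, b) \<in> K" unfolding R_def by auto
        have xK: "x \<in> fst (closed_form (AA K c))" using inc xH domH unfolding form_incl_def by blast
        have "snd (closed_form H) f x = cinner g x" using H_cf_val[OF sa bbH] z zz xH by blast
        moreover have "snd (closed_form (AA K c)) f x = snd (closed_form H) f x"
          using inc fH xH domH unfolding form_incl_def by blast
        moreover have "snd (closed_form (AA K c)) f x = complex_of_real c * cinner f x + cinner a b"
          by (rule cf_val[OF Klin Kcl Kop fK xK fa xbK])
        ultimately have "cinner g x = complex_of_real c * cinner f x + cinner a b" by simp
        hence "cinner (g - scaleC (complex_of_real c) f) x = cinner a b"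
          unfolding cinner_diff_left cinner_scaleC_left by simp
        thus "cinner b a = cinner x (g - scaleC (complex_of_real c) f)" by (rule cinner_swap[symmetric])
      qed
      moreover have "(f, a) \<in> adj (adj R)" using faR adj_adj_sup by blast
      ultimately show "z \<in> H'" unfolding zz H'_def rshift_iff rprod_iff by blast
    qed
    have "H' \<subseteq> H" using adj_antimono[OF HH'] saH' sa unfolding selfadjoint_def by simp
    hence "H = H'" using HH' by blast
    thus "\<exists>R. is_operator R \<and> Q \<subseteq> R \<and> R \<subseteq> K \<and> H = rshift c (rprod (adj R) (adj (adj R)))"
      using Rop QR RK unfolding H'_def by blast
  next
    assume "\<exists>R. is_operator R \<and> Q \<subseteq> R \<and> R \<subseteq> K \<and> H = rshift c (rprod (adj R) (adj (adj R)))"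
    then obtain R where Rop: "is_operator R" and QR: "Q \<subseteq> R" and RK: "R \<subseteq> K"
      and Heq: "H = rshift c (rprod (adj R) (adj (adj R)))" by blast
    define T2 where "T2 = adj (adj R)"
    have T2op: "is_operator T2" and T2K: "T2 \<subseteq> K" unfolding T2_def using closed_op_sub[OF Kop Kcl RK] by auto
    have T2lin: "linear_relation T2" and T2cl: "closed T2" unfolding T2_def by (rule adj_linear, rule adj_closed)
    have H2: "H = AA T2 c" unfolding Heq AA_eq T2_def adj3 ..
    define T1 where "T1 = adj (adj Q)"
    have T1op: "is_operator T1" and T1K: "T1 \<subseteq> K" unfolding T1_def using closed_op_sub[OF Kop Kcl QK] by auto
    have T1lin: "linear_relation T1" and T1cl: "closed T1" unfolding T1_def by (rule adj_linear, rule adj_closed)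
    have F: "friedrichs c Q = AA T1 c" unfolding friedrichs_def AA_eq T1_def adj3 ..
    have T12: "T1 \<subseteq> T2" unfolding T1_def T2_def using adj_antimono[OF adj_antimono[OF QR]] .
    have "selfadjoint H" unfolding H2 by (rule AA_sa[OF T2lin T2cl T2op])
    moreover have "S \<subseteq> H" unfolding Heq using Ssub[OF RK QR] .
    moreover have "bounded_below_by H c" unfolding H2 AA_eq by (rule bounded_below_shift_prod)
    moreover have "form_incl (closed_form (friedrichs c Q)) (closed_form H)"
      unfolding F H2 by (rule form_incl_AA[OF T1lin T1cl T1op T2lin T2cl T2op T12])
    moreover have "form_incl (closed_form H) (closed_form (krein c J))"
      unfolding krein_eq H2 by (rule form_incl_AA[OF T2lin T2cl T2op Klin Kcl Kop T2K])
    ultimately show "selfadjoint H \<and> S \<subseteq> H \<and> bounded_below_by H c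
          \<and> form_incl (closed_form (friedrichs c Q)) (closed_form H)
          \<and> form_incl (closed_form H) (closed_form (krein c J))" by blast
  qed
qed

end
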